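(* For every $n>6$, the sensitivity to synchronism of elementary cellular automaton rule $128$ satisfies $\mu(f_{128,n})=\dfrac{3^n-2^{n+1}-10n+2}{3^n-2^{n+1}+2}$.
   Context: Cells are indexed by $\mathbb{Z}_n=\{0,\dots,n-1\}$, indices modulo $n$. Rule $128$ has local rule $r_{128}(x_1,x_2,x_3)=x_1\wedge x_2\wedge x_3$ and global function $f_{128,n}(x)_i=r_{128}(x_{i-1},x_i,x_{i+1})$. An update schedule is an ordered partition $\Delta=(\Delta_1,\dots,\Delta_k)$ of $\mathbb{Z}_n$ into nonempty blocks; $\mathcal{P}_n$ is the set of them. For a block $B$ let $f^{(B)}(x)_i=f_{128,n}(x)_i$ if $i\in B$ and $x_i$ otherwise; $f^{(\Delta)}_{128,n}=f^{(\Delta_k)}\circ\cdots\circ f^{(\Delta_1)}$. The dynamics of $\Delta$ is the transition digraph with arcs $(x,f^{(\Delta)}_{128,n}(x))$; $\mathcal{D}(f_{128,n})$ is the set of distinct dynamics over $\Delta\in\mathcal{P}_n$. The sensitivity to synchronism is $\mu(f_{128,n})=|\mathcal{D}(f_{128,n})|/(3^n-2^{n+1}+2)$. *)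

theory Defs
  imports Complex_Main
begin

definition configs :: "nat \<Rightarrow> (nat \<Rightarrow> bool) set" where
  "configs n = {x. \<forall>i. n \<le> i \<longrightarrow> \<not> x i}"

definition r128 :: "bool \<Rightarrow> bool \<Rightarrow> bool \<Rightarrow> bool" where
  "r128 a b c = (a \<and> b \<and> c)"

definition f128 :: "nat \<Rightarrow> (nat \<Rightarrow> bool) \<Rightarrow> (nat \<Rightarrow> bool)" where
  "f128 n x = (\<lambda>i. if i < n then r128 (x ((i + n - 1) mod n)) (x i) (x ((i + 1) mod n)) else x i)"

definition block_update :: "nat \<Rightarrow> nat set \<Rightarrow> (nat \<Rightarrow> bool) \<Rightarrow> (nat \<Rightarrow> bool)" where
  "block_update n B x = (\<lambda>i. if i \<in> B then f128 n x i else x i)"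

text \<open>Schedule (Delta_1,...,Delta_k): apply Delta_1 first, Delta_k last.\<close>
definition sched_update :: "nat \<Rightarrow> nat set list \<Rightarrow> (nat \<Rightarrow> bool) \<Rightarrow> (nat \<Rightarrow> bool)" where
  "sched_update n D x = fold (block_update n) D x"

definition ordered_partitions :: "nat \<Rightarrow> nat set list set" where
  "ordered_partitions n = {D. (\<forall>B \<in> set D. B \<noteq> {}) \<and>
      (\<forall>i j. i < length D \<and> j < length D \<and> i \<noteq> j \<longrightarrow> D ! i \<inter> D ! j = {}) \<and>
      \<Union> (set D) = {..<n}}"

definition dynamics :: "nat \<Rightarrow> nat set list \<Rightarrow> ((nat \<Rightarrow> bool) \<times> (nat \<Rightarrow> bool)) set" where
  "dynamics n D = {(x, sched_update n D x) | x. x \<in> configs n}"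

definition all_dynamics :: "nat \<Rightarrow> ((nat \<Rightarrow> bool) \<times> (nat \<Rightarrow> bool)) set set" where
  "all_dynamics n = dynamics n ` ordered_partitions n"

definition sensitivity :: "nat \<Rightarrow> real" where
  "sensitivity n = real (card (all_dynamics n)) / (3 ^ n - 2 ^ (n + 1) + 2)"

end

theory Submission
  imports Defs "HOL-Library.FuncSet"
begin

definition nb :: "nat \<Rightarrow> nat set \<Rightarrow> nat \<Rightarrow> nat set" where
  "nb n B i = (if i \<in> B \<and> i < n then {(i+n-1) mod n, i, (i+1) mod n} else {i})"

definition relstep :: "nat \<Rightarrow> nat set \<Rightarrow> (nat \<Rightarrow> nat set) \<Rightarrow> (nat \<Rightarrow> nat set)" where
  "relstep n B R = (\<lambda>i. \<Union>k\<in>nb n B i. R k)"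

definition relD :: "nat \<Rightarrow> nat set list \<Rightarrow> nat \<Rightarrow> nat set" where
  "relD n D = fold (relstep n) D (\<lambda>i. {i})"

lemma block_update_and:
  assumes "\<And>i. x i = (\<forall>j\<in>R i. y j)"
  shows "block_update n B x i = (\<forall>j\<in>relstep n B R i. y j)"
  using assms by (auto simp: block_update_def f128_def r128_def relstep_def nb_def)

lemma fold_and:
  assumes "\<And>i. x i = (\<forall>j\<in>R i. y j)"
  shows "fold (block_update n) D x i = (\<forall>j\<in>fold (relstep n) D R i. y j)"
  using assms
proof (induction D arbitrary: x R)
  case Nil then show ?case by simp
next
  case (Cons B D)
  have "block_update n B x = (\<lambda>i. \<forall>j\<in>relstep n B R i. y j)"
    using block_update_and[OF Cons.prems] by (simp add: fun_eq_iff)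
  then show ?case using Cons.IH[of "block_update n B x" "relstep n B R"] by simp
qed

lemma sched_rel: "sched_update n D x i = (\<forall>j\<in>relD n D i. x j)"
  unfolding sched_update_def relD_def by (rule fold_and) simp

lemma relD_big: "i \<ge> n \<Longrightarrow> fold (relstep n) D R i = R i"
proof (induction D arbitrary: R)
  case Nil then show ?case by simp
next
  case (Cons B D) then show ?case by (simp add: relstep_def nb_def)
qed

lemma relD_sub: "i < n \<Longrightarrow> (\<forall>k<n. R k \<subseteq> {..<n}) \<Longrightarrow> fold (relstep n) D R i \<subseteq> {..<n}"
proof (induction D arbitrary: R)
  case Nil then show ?case by simp
next
  case (Cons B D)
  have "\<forall>k<n. relstep n B R k \<subseteq> {..<n}"
    using Cons.prems(2) by (auto simp: relstep_def nb_def)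
  then show ?case using Cons by simp
qed

lemma relD_ge: "i \<ge> n \<Longrightarrow> relD n D i = {i}"
  unfolding relD_def by (simp add: relD_big)

lemma relD_lt: "i < n \<Longrightarrow> relD n D i \<subseteq> {..<n}"
  unfolding relD_def by (rule relD_sub) auto

lemma dyn_eq_iff:
  "dynamics n D = dynamics n D' \<longleftrightarrow> (\<forall>i<n. relD n D i = relD n D' i)"
proof
  assume H: "\<forall>i<n. relD n D i = relD n D' i"
  have "\<And>x. sched_update n D x = sched_update n D' x"
  proof
    fix x i show "sched_update n D x i = sched_update n D' x i"
      using H relD_ge[of n i D] relD_ge[of n i D'] by (cases "i < n") (auto simp: sched_rel)
  qed
  then show "dynamics n D = dynamics n D'" unfolding dynamics_def by simp
next
  assume E: "dynamics n D = dynamics n D'"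
  have S: "sched_update n D x = sched_update n D' x" if "x \<in> configs n" for x
  proof -
    have "(x, sched_update n D x) \<in> dynamics n D'" using E that unfolding dynamics_def by auto
    then show ?thesis unfolding dynamics_def by auto
  qed
  show "\<forall>i<n. relD n D i = relD n D' i"
  proof (intro allI impI)
    fix i assume i: "i < n"
    show "relD n D i = relD n D' i"
    proof (rule ccontr)
      assume ne: "relD n D i \<noteq> relD n D' i"
      then obtain j where j: "(j \<in> relD n D i \<and> j \<notin> relD n D' i) \<or> (j \<notin> relD n D i \<and> j \<in> relD n D' i)"
        by blast
      define x where "x = (\<lambda>k. k < n \<and> k \<noteq> j)"
      have xc: "x \<in> configs n" unfolding configs_def x_def by auto
      have "sched_update n D x i = sched_update n D' x i" using S[OF xc] by simp
      moreover have "j < n" using j relD_lt[OF i, of D] relD_lt[OF i, of D'] by auto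
      ultimately show False using j relD_lt[OF i, of D] relD_lt[OF i, of D']
        unfolding sched_rel x_def by auto
    qed
  qed
qed

definition Lab :: "nat \<Rightarrow> (nat \<Rightarrow> int) set" where
  "Lab n = PiE {..<n} (\<lambda>_. {-1,0,1})"

definition AA :: "nat \<Rightarrow> (nat \<Rightarrow> int) \<Rightarrow> int \<Rightarrow> int" where
  "AA n b j = b (nat (j mod int n))"

definition Real :: "nat \<Rightarrow> (nat \<Rightarrow> int) set" where
  "Real n = {b \<in> Lab n. (\<forall>i<n. b i = 0) \<or> ((\<exists>i<n. b i = 1) \<and> (\<exists>i<n. b i = -1))}"

definition PP :: "nat \<Rightarrow> (nat \<Rightarrow> int) \<Rightarrow> int \<Rightarrow> nat" where
  "PP n b i = (LEAST m::nat. AA n b (i - 1 - int m) \<noteq> 1)"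

definition QQ :: "nat \<Rightarrow> (nat \<Rightarrow> int) \<Rightarrow> int \<Rightarrow> nat" where
  "QQ n b i = (LEAST m::nat. AA n b (i + int m) \<noteq> -1)"

definition full :: "nat \<Rightarrow> (nat \<Rightarrow> int) \<Rightarrow> int \<Rightarrow> bool" where
  "full n b i = (n \<le> PP n b i + QQ n b i + 3)"

definition Data :: "nat \<Rightarrow> (nat \<Rightarrow> int) \<Rightarrow> int \<Rightarrow> (nat \<times> nat) option" where
  "Data n b i = (if full n b i then None else Some (PP n b i, QQ n b i))"

lemma AA_mod: "AA n b (j mod int n) = AA n b j"
  by (simp add: AA_def)

lemma AA_per: "AA n b (j + int n * c) = AA n b j"
  by (simp add: AA_def)

lemma AA_per1: "AA n b (j + int n) = AA n b j"
  using AA_per[of n b j 1] by simp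

lemma AA_per1': "AA n b (j - int n) = AA n b j"
  using AA_per[of n b j "-1"] by simp

lemma AA_cong: "j mod int n = j' mod int n \<Longrightarrow> AA n b j = AA n b j'"
  by (simp add: AA_def)

lemma AA_nat: "i < n \<Longrightarrow> AA n b (int i) = b i"
  by (simp add: AA_def)

lemma AA_range: "b \<in> Lab n \<Longrightarrow> 0 < n \<Longrightarrow> AA n b j \<in> {-1,0,1}"
proof -
  assume b: "b \<in> Lab n" and n: "0 < n"
  have "nat (j mod int n) < n" using n by (simp add: nat_less_iff)
  then show ?thesis using b unfolding AA_def Lab_def by (auto simp: PiE_iff)
qed

lemma ex_not1: assumes "b \<in> Real n" "0 < n" shows "\<exists>j. AA n b j \<noteq> 1"
proof (cases "\<forall>i<n. b i = 0")
  case True then show ?thesis using AA_nat[of 0 n b] assms(2) by (intro exI[of _ 0]) simp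
next
  case False then obtain i where "i < n" "b i = -1" using assms(1) unfolding Real_def by blast
  then show ?thesis using AA_nat[of i n b] by (intro exI[of _ "int i"]) simp
qed

lemma ex_notm1: assumes "b \<in> Real n" "0 < n" shows "\<exists>j. AA n b j \<noteq> -1"
proof (cases "\<forall>i<n. b i = 0")
  case True then show ?thesis using AA_nat[of 0 n b] assms(2) by (intro exI[of _ 0]) simp
next
  case False then obtain i where "i < n" "b i = 1" using assms(1) unfolding Real_def by blast
  then show ?thesis using AA_nat[of i n b] by (intro exI[of _ "int i"]) simp
qed

lemma PP_ex:
  assumes "\<exists>j. AA n b j \<noteq> 1" "0 < n"
  shows "\<exists>m. m < n \<and> AA n b (i - 1 - int m) \<noteq> 1"
proof -
  obtain j where j: "AA n b j \<noteq> 1" using assms by blast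
  define m where "m = nat ((i - 1 - j) mod int n)"
  have m: "int m = (i - 1 - j) mod int n" using assms(2) unfolding m_def by simp
  have "int m < int n" using assms(2) m by simp
  then have "m < n" by simp
  moreover have "(i - 1 - int m) mod int n = j mod int n"
    unfolding m by (simp add: mod_diff_right_eq)
  ultimately show ?thesis using j AA_cong[of "i - 1 - int m" n j b] by auto
qed

lemma QQ_ex:
  assumes "\<exists>j. AA n b j \<noteq> -1" "0 < n"
  shows "\<exists>m. m < n \<and> AA n b (i + int m) \<noteq> -1"
proof -
  obtain j where j: "AA n b j \<noteq> -1" using assms by blast
  define m where "m = nat ((j - i) mod int n)"
  have m: "int m = (j - i) mod int n" using assms(2) unfolding m_def by simp
  have "int m < int n" using assms(2) m by simp
  then have "m < n" by simp
  moreover have "(i + int m) mod int n = j mod int n"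
    unfolding m by (simp add: mod_add_right_eq)
  ultimately show ?thesis using j AA_cong[of "i + int m" n j b] by auto
qed

lemma PP_lt: "\<exists>j. AA n b j \<noteq> 1 \<Longrightarrow> 0 < n \<Longrightarrow> PP n b i < n"
proof -
  assume "\<exists>j. AA n b j \<noteq> 1" "0 < n"
  then obtain m where "m < n" "AA n b (i - 1 - int m) \<noteq> 1" using PP_ex by blast
  then show ?thesis unfolding PP_def using Least_le[of "\<lambda>m. AA n b (i - 1 - int m) \<noteq> 1" m] by linarith
qed

lemma QQ_lt: "\<exists>j. AA n b j \<noteq> -1 \<Longrightarrow> 0 < n \<Longrightarrow> QQ n b i < n"
proof -
  assume "\<exists>j. AA n b j \<noteq> -1" "0 < n"
  then obtain m where "m < n" "AA n b (i + int m) \<noteq> -1" using QQ_ex by blast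
  then show ?thesis unfolding QQ_def using Least_le[of "\<lambda>m. AA n b (i + int m) \<noteq> -1" m] by linarith
qed

lemma PP_stop: "\<exists>j. AA n b j \<noteq> 1 \<Longrightarrow> 0 < n \<Longrightarrow> AA n b (i - 1 - int (PP n b i)) \<noteq> 1"
proof -
  assume "\<exists>j. AA n b j \<noteq> 1" "0 < n"
  then obtain m where "AA n b (i - 1 - int m) \<noteq> 1" using PP_ex by blast
  then show ?thesis unfolding PP_def by (rule LeastI)
qed

lemma QQ_stop: "\<exists>j. AA n b j \<noteq> -1 \<Longrightarrow> 0 < n \<Longrightarrow> AA n b (i + int (QQ n b i)) \<noteq> -1"
proof -
  assume "\<exists>j. AA n b j \<noteq> -1" "0 < n"
  then obtain m where "AA n b (i + int m) \<noteq> -1" using QQ_ex by blast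
  then show ?thesis unfolding QQ_def by (rule LeastI)
qed

lemma PP_run: "k < PP n b i \<Longrightarrow> AA n b (i - 1 - int k) = 1"
  unfolding PP_def using not_less_Least by blast

lemma QQ_run: "k < QQ n b i \<Longrightarrow> AA n b (i + int k) = -1"
  unfolding QQ_def using not_less_Least by blast

lemma PP_eqI: "(\<forall>k<m. AA n b (i - 1 - int k) = 1) \<Longrightarrow> AA n b (i - 1 - int m) \<noteq> 1 \<Longrightarrow> PP n b i = m"
  unfolding PP_def by (rule Least_equality) (auto simp: not_le[symmetric])

lemma QQ_eqI: "(\<forall>k<m. AA n b (i + int k) = -1) \<Longrightarrow> AA n b (i + int m) \<noteq> -1 \<Longrightarrow> QQ n b i = m"
  unfolding QQ_def by (rule Least_equality) (auto simp: not_le[symmetric])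

lemma PP_ge: "\<exists>j. AA n b j \<noteq> 1 \<Longrightarrow> 0 < n \<Longrightarrow> (\<forall>k<m. AA n b (i - 1 - int k) = 1) \<Longrightarrow> m \<le> PP n b i"
proof (rule ccontr)
  assume "\<exists>j. AA n b j \<noteq> 1" "0 < n" "\<forall>k<m. AA n b (i - 1 - int k) = 1" "\<not> m \<le> PP n b i"
  then show False using PP_stop[of n b i] by auto
qed

lemma QQ_ge: "\<exists>j. AA n b j \<noteq> -1 \<Longrightarrow> 0 < n \<Longrightarrow> (\<forall>k<m. AA n b (i + int k) = -1) \<Longrightarrow> m \<le> QQ n b i"
proof (rule ccontr)
  assume "\<exists>j. AA n b j \<noteq> -1" "0 < n" "\<forall>k<m. AA n b (i + int k) = -1" "\<not> m \<le> QQ n b i"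
  then show False using QQ_stop[of n b i] by auto
qed

lemma PP_zero: "AA n b (i - 1) \<noteq> 1 \<Longrightarrow> PP n b i = 0"
  by (rule PP_eqI) auto

lemma QQ_zero: "AA n b i \<noteq> -1 \<Longrightarrow> QQ n b i = 0"
  by (rule QQ_eqI) auto

lemma PP_suc:
  assumes "\<exists>j. AA n b j \<noteq> 1" "0 < n" "AA n b (i - 1) = 1"
  shows "PP n b i = Suc (PP n b (i - 1))"
proof (rule PP_eqI)
  show "\<forall>k<Suc (PP n b (i - 1)). AA n b (i - 1 - int k) = 1"
  proof (intro allI impI)
    fix k assume "k < Suc (PP n b (i - 1))"
    then show "AA n b (i - 1 - int k) = 1"
      using assms(3) PP_run[of "k - 1" n b "i - 1"] by (cases k) (auto simp: algebra_simps)
  qed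
  show "AA n b (i - 1 - int (Suc (PP n b (i - 1)))) \<noteq> 1"
    using PP_stop[OF assms(1,2), of "i - 1"] by (simp add: algebra_simps)
qed

lemma QQ_suc:
  assumes "\<exists>j. AA n b j \<noteq> -1" "0 < n" "AA n b i = -1"
  shows "QQ n b i = Suc (QQ n b (i + 1))"
proof (rule QQ_eqI)
  show "\<forall>k<Suc (QQ n b (i + 1)). AA n b (i + int k) = -1"
  proof (intro allI impI)
    fix k assume "k < Suc (QQ n b (i + 1))"
    then show "AA n b (i + int k) = -1"
      using assms(3) QQ_run[of "k - 1" n b "i + 1"] by (cases k) (auto simp: algebra_simps)
  qed
  show "AA n b (i + int (Suc (QQ n b (i + 1)))) \<noteq> -1"
    using QQ_stop[OF assms(1,2), of "i + 1"] by (simp add: algebra_simps)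
qed

lemma PP_cong: "i mod int n = i' mod int n \<Longrightarrow> PP n b i = PP n b i'"
proof -
  assume h: "i mod int n = i' mod int n"
  have "\<And>m. AA n b (i - 1 - int m) = AA n b (i' - 1 - int m)"
    by (rule AA_cong) (rule mod_diff_cong[OF mod_diff_cong[OF h refl] refl])
  then show ?thesis unfolding PP_def by simp
qed

lemma QQ_cong: "i mod int n = i' mod int n \<Longrightarrow> QQ n b i = QQ n b i'"
proof -
  assume h: "i mod int n = i' mod int n"
  have "\<And>m. AA n b (i + int m) = AA n b (i' + int m)"
    by (rule AA_cong) (rule mod_add_cong[OF h refl])
  then show ?thesis unfolding QQ_def by simp
qed

lemma Data_cong: "i mod int n = i' mod int n \<Longrightarrow> Data n b i = Data n b i'"
  unfolding Data_def full_def by (simp only: PP_cong[of i n i' b] QQ_cong[of i n i' b])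

definition XP :: "nat \<Rightarrow> (nat \<Rightarrow> int) \<Rightarrow> nat \<Rightarrow> bool" where
  "XP n b d = (b d = 0 \<and> (\<forall>k. 1 \<le> k \<and> k \<le> n - 3 \<longrightarrow> AA n b (int d - int k) = 1))"

definition XQ :: "nat \<Rightarrow> (nat \<Rightarrow> int) \<Rightarrow> nat \<Rightarrow> bool" where
  "XQ n b d = (b d = 0 \<and> (\<forall>k. 1 \<le> k \<and> k \<le> n - 3 \<longrightarrow> AA n b (int d + int k) = -1))"

definition X :: "nat \<Rightarrow> (nat \<Rightarrow> int) set" where
  "X n = {b \<in> Real n. \<exists>d<n. XP n b d \<or> XQ n b d}"

lemma DE1: "Data n a i = Data n b i \<Longrightarrow> \<not> full n b i \<Longrightarrow> PP n a i = PP n b i \<and> QQ n a i = QQ n b i"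
  unfolding Data_def by (auto split: if_splits)

lemma DE2: "Data n a i = Data n b i \<Longrightarrow> full n a i = full n b i"
  unfolding Data_def by (auto split: if_splits)

lemma runP_shift: "n - 3 \<le> PP n b (int d) \<Longrightarrow> 1 \<le> k \<and> k \<le> n - 3 \<Longrightarrow> AA n b (int d - int k) = 1"
proof -
  assume h: "n - 3 \<le> PP n b (int d)" and k: "1 \<le> k \<and> k \<le> n - 3"
  then have "k - 1 < PP n b (int d)" by linarith
  then have "AA n b (int d - 1 - int (k - 1)) = 1" by (rule PP_run)
  moreover have "int d - 1 - int (k - 1) = int d - int k" using k by (simp add: of_nat_diff)
  ultimately show ?thesis by simp
qed

lemma K1:
  assumes n: "7 \<le> n" and a: "a \<in> Real n" and b: "b \<in> Real n" and D: "\<forall>i. Data n a i = Data n b i"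
    and d: "d < n" and ad: "a d = -1" and bd: "b d = 0"
  shows "XP n b d"
proof -
  define i where "i = int d"
  have n0: "0 < n" using n by simp
  have Aa: "AA n a i = -1" using ad d AA_nat i_def by simp
  have Ab: "AA n b i = 0" using bd d AA_nat i_def by simp
  have "QQ n a i = Suc (QQ n a (i + 1))" by (rule QQ_suc[OF ex_notm1[OF a n0] n0 Aa])
  moreover have "QQ n b i = 0" using Ab by (intro QQ_zero) simp
  ultimately have "full n b i" using DE1[OF D[rule_format, of i]] by auto
  then have "n - 3 \<le> PP n b i" using \<open>QQ n b i = 0\<close> unfolding full_def by simp
  then have "\<forall>k. 1 \<le> k \<and> k \<le> n - 3 \<longrightarrow> AA n b (int d - int k) = 1"
    using runP_shift by (simp add: i_def)
  then show ?thesis unfolding XP_def using bd by simp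
qed

lemma runQ_shift: "n - 3 \<le> QQ n b (int d + 1) \<Longrightarrow> 1 \<le> k \<and> k \<le> n - 3 \<Longrightarrow> AA n b (int d + int k) = -1"
proof -
  assume h: "n - 3 \<le> QQ n b (int d + 1)" and k: "1 \<le> k \<and> k \<le> n - 3"
  then have "k - 1 < QQ n b (int d + 1)" by linarith
  then have "AA n b (int d + 1 + int (k - 1)) = -1" by (rule QQ_run)
  moreover have "int d + 1 + int (k - 1) = int d + int k" using k by (simp add: of_nat_diff)
  ultimately show ?thesis by simp
qed

lemma K2:
  assumes n: "7 \<le> n" and a: "a \<in> Real n" and b: "b \<in> Real n" and D: "\<forall>i. Data n a i = Data n b i"
    and d: "d < n" and ad: "a d = 1" and bd: "b d = 0"
  shows "XQ n b d"
proof -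
  define i where "i = int d + 1"
  have n0: "0 < n" using n by simp
  have Aa: "AA n a (i - 1) = 1" using ad d AA_nat i_def by simp
  have Ab: "AA n b (i - 1) = 0" using bd d AA_nat i_def by simp
  have "PP n a i = Suc (PP n a (i - 1))" by (rule PP_suc[OF ex_not1[OF a n0] n0 Aa])
  moreover have "PP n b i = 0" using Ab by (intro PP_zero) simp
  ultimately have "full n b i" using DE1[OF D[rule_format, of i]] by auto
  then have "n - 3 \<le> QQ n b i" using \<open>PP n b i = 0\<close> unfolding full_def by simp
  then have "\<forall>k. 1 \<le> k \<and> k \<le> n - 3 \<longrightarrow> AA n b (int d + int k) = -1"
    using runQ_shift by (simp add: i_def)
  then show ?thesis unfolding XQ_def using bd by simp
qed

lemma K3:
  assumes n: "7 \<le> n" and a: "a \<in> Real n" and b: "b \<in> Real n" and D: "\<forall>i. Data n a i = Data n b i"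
    and d: "d < n" and ad: "a d = 1" and bd: "b d = -1"
  shows False
proof -
  define i where "i = int d"
  have n0: "0 < n" using n by simp
  note ea = ex_not1[OF a n0] ex_notm1[OF a n0]
  note eb = ex_not1[OF b n0] ex_notm1[OF b n0]
  have Aa: "AA n a i = 1" using ad d AA_nat i_def by simp
  have Ab: "AA n b i = -1" using bd d AA_nat i_def by simp
  have q1: "QQ n a i = 0" using Aa by (intro QQ_zero) simp
  have q2: "QQ n b i = Suc (QQ n b (i + 1))" by (rule QQ_suc[OF eb(2) n0 Ab])
  have "full n b i" using DE1[OF D[rule_format, of i]] q1 q2 by auto
  then have "full n a i" using DE2[OF D[rule_format, of i]] by simp
  then have Pa: "n - 3 \<le> PP n a i" using q1 unfolding full_def by simp
  have p1: "PP n a (i + 1) = Suc (PP n a i)" using PP_suc[OF ea(1) n0, of "i + 1"] Aa by simp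
  have p2: "PP n b (i + 1) = 0" using Ab by (intro PP_zero) simp
  have "full n b (i + 1)" using DE1[OF D[rule_format, of "i + 1"]] p1 p2 by auto
  then have Qb: "n - 3 \<le> QQ n b (i + 1)" using p2 unfolding full_def by simp
  have "AA n a (i - 1 - int (n - 4)) = 1" using Pa n by (intro PP_run) simp
  moreover have "(i - 1 - int (n - 4)) mod int n = (i + 3) mod int n"
  proof -
    have e: "i - 1 - int (n - 4) = (i + 3) + (-1) * int n" using n by (simp add: of_nat_diff)
    show ?thesis unfolding e by (rule mod_mult_self1)
  qed
  ultimately have a3: "AA n a (i + 3) = 1" using AA_cong[of "i - 1 - int (n - 4)" n "i + 3" a] by simp
  have qa3: "QQ n a (i + 3) = 0" using a3 by (intro QQ_zero) simp
  have qa2: "QQ n a (i + 2) \<le> 1"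
  proof (cases "AA n a (i + 2) = -1")
    case True
    then have "QQ n a (i + 2) = Suc (QQ n a (i + 2 + 1))" by (rule QQ_suc[OF ea(2) n0])
    then show ?thesis using qa3 by (simp add: add.assoc)
  next
    case False then show ?thesis using QQ_zero by simp
  qed
  have b1: "AA n b (i + 1) = -1" using QQ_run[of 0 n b "i + 1"] Qb n by simp
  have pb2: "PP n b (i + 2) = 0" using b1 by (intro PP_zero) (simp add: add.commute)
  have qb1: "QQ n b (i + 1) = Suc (QQ n b (i + 2))"
    using QQ_suc[OF eb(2) n0 b1] by (simp add: add.assoc)
  show False
  proof (cases "full n b (i + 2)")
    case False
    then have "QQ n a (i + 2) = QQ n b (i + 2)" using DE1[OF D[rule_format, of "i + 2"]] by simp
    then show False using qa2 qb1 Qb n by simp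
  next
    case True
    then have "n - 3 \<le> QQ n b (i + 2)" using pb2 unfolding full_def by simp
    then have "AA n b (i + 1 + int (n - 3)) = -1" using qb1 by (intro QQ_run) simp
    moreover have "(i + 1 + int (n - 3)) mod int n = (i - 2) mod int n"
    proof -
      have e: "i + 1 + int (n - 3) = (i - 2) + 1 * int n" using n by (simp add: of_nat_diff)
      show ?thesis unfolding e by (rule mod_mult_self1)
    qed
    ultimately have bm2: "AA n b (i - 2) = -1" using AA_cong[of "i + 1 + int (n - 3)" n "i - 2" b] by simp
    have am2: "AA n a (i - 1 - 1) = 1" using PP_run[of 1 n a i] Pa n by simp
    have pbm1: "PP n b (i - 1) = 0" using bm2 by (intro PP_zero) simp
    have pam1: "PP n a (i - 1) = Suc (PP n a (i - 1 - 1))" using am2 by (intro PP_suc[OF ea(1) n0]) simp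
    have "full n b (i - 1)" using DE1[OF D[rule_format, of "i - 1"]] pbm1 pam1 by auto
    then have Qm1: "n - 3 \<le> QQ n b (i - 1)" using pbm1 unfolding full_def by simp
    have "AA n b (i - 1 + int 0) = -1" using Qm1 n by (intro QQ_run) simp
    then have "QQ n b (i - 1) = Suc (QQ n b (i - 1 + 1))" using QQ_suc[OF eb(2) n0] by simp
    then have "QQ n b (i - 1) = Suc (Suc (Suc (QQ n b (i + 2))))" using q2 qb1 by simp
    then have "n \<le> QQ n b (i - 1)" using \<open>n - 3 \<le> QQ n b (i + 2)\<close> by simp
    then show False using QQ_lt[OF eb(2) n0, of "i - 1"] by simp
  qed
qed

lemma key:
  assumes n: "7 \<le> n" and a: "a \<in> Real n" and b: "b \<in> Real n" and D: "\<forall>i. Data n a i = Data n b i"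
    and d: "d < n" and ne: "a d \<noteq> b d"
  shows "a \<in> X n \<or> b \<in> X n"
proof -
  have D': "\<forall>i. Data n b i = Data n a i" using D by simp
  have "a d \<in> {-1,0,1}" "b d \<in> {-1,0,1}" using a b d unfolding Real_def Lab_def by (auto simp: PiE_iff)
  then consider "a d = -1" "b d = 0" | "a d = 1" "b d = 0" | "a d = 1" "b d = -1"
    | "b d = -1" "a d = 0" | "b d = 1" "a d = 0" | "b d = 1" "a d = -1"
    using ne by auto
  then show ?thesis
  proof cases
    case 1 then show ?thesis using K1[OF n a b D d] b d unfolding X_def by blast
  next
    case 2 then show ?thesis using K2[OF n a b D d] b d unfolding X_def by blast
  next
    case 3 then show ?thesis using K3[OF n a b D d] by blast
  next
    case 4 then show ?thesis using K1[OF n b a D' d] a d unfolding X_def by blast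
  next
    case 5 then show ?thesis using K2[OF n b a D' d] a d unfolding X_def by blast
  next
    case 6 then show ?thesis using K3[OF n b a D' d] by blast
  qed
qed

lemma AA_upd: "d < n \<Longrightarrow> AA n (b(d := v)) j = (if j mod int n = int d then v else AA n b j)"
  unfolding AA_def by auto

lemma AA_at: "j mod int n = int d \<Longrightarrow> AA n b j = b d"
  unfolding AA_def by simp

lemma mod_shift_eq: "(x + (j - x) mod (m::int)) mod m = j mod m"
  by (simp add: mod_add_right_eq)

lemma RP:
  assumes n: "6 \<le> n" and run: "\<forall>k. 1 \<le> k \<and> k \<le> n - 3 \<longrightarrow> AA n b (int d - int k) = 1"
    and j: "AA n b j \<noteq> 1"
  shows "(j - int d) mod int n \<in> {0,1,2}"
proof (rule ccontr)
  define r where "r = (j - int d) mod int n"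
  assume "(j - int d) mod int n \<notin> {0,1,2}"
  then have "r \<noteq> 0 \<and> r \<noteq> 1 \<and> r \<noteq> 2" unfolding r_def by simp
  moreover have "0 \<le> r" using n unfolding r_def by simp
  ultimately have r3: "3 \<le> r" by linarith
  have rn: "r < int n" using n unfolding r_def by simp
  define k where "k = n - nat r"
  have k: "1 \<le> k \<and> k \<le> n - 3" using r3 rn unfolding k_def by linarith
  have e: "int d - int k = (int d + r) + (-1) * int n" using r3 rn unfolding k_def by (simp add: of_nat_diff)
  have "(int d - int k) mod int n = (int d + r) mod int n" unfolding e by (rule mod_mult_self1)
  also have "\<dots> = j mod int n" unfolding r_def by (rule mod_shift_eq)
  finally have "AA n b (int d - int k) = AA n b j" by (rule AA_cong)
  then show False using run k j by simp
qed

lemma RQ: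
  assumes n: "6 \<le> n" and run: "\<forall>k. 1 \<le> k \<and> k \<le> n - 3 \<longrightarrow> AA n b (int d + int k) = -1"
    and j: "AA n b j \<noteq> -1"
  shows "(int d - j) mod int n \<in> {0,1,2}"
proof (rule ccontr)
  define r where "r = (int d - j) mod int n"
  assume "(int d - j) mod int n \<notin> {0,1,2}"
  then have "r \<noteq> 0 \<and> r \<noteq> 1 \<and> r \<noteq> 2" unfolding r_def by simp
  moreover have "0 \<le> r" using n unfolding r_def by simp
  ultimately have r3: "3 \<le> r" by linarith
  have rn: "r < int n" using n unfolding r_def by simp
  define k where "k = n - nat r"
  have k: "1 \<le> k \<and> k \<le> n - 3" using r3 rn unfolding k_def by linarith
  have e: "int d + int k = (int d - r) + 1 * int n" using r3 rn unfolding k_def by (simp add: of_nat_diff)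
  have "(int d + int k) mod int n = (int d - r) mod int n" unfolding e by (rule mod_mult_self1)
  also have "\<dots> = j mod int n" unfolding r_def by (simp add: mod_diff_right_eq)
  finally have "AA n b (int d + int k) = AA n b j" by (rule AA_cong)
  then show False using run k j by simp
qed

lemma mod0_eq_nat: "(int x - int y) mod int n = 0 \<Longrightarrow> x < n \<Longrightarrow> y < n \<Longrightarrow> x = y"
proof -
  assume h: "(int x - int y) mod int n = 0" "x < n" "y < n"
  then have "int n dvd int x - int y" by (simp add: dvd_eq_mod_eq_0)
  then have "int x mod int n = int y mod int n" by (simp add: mod_eq_dvd_iff)
  then show "x = y" using h(2,3) by simp
qed

lemma upd_Lab: "b \<in> Lab n \<Longrightarrow> d < n \<Longrightarrow> v \<in> {-1,0,1} \<Longrightarrow> b(d := v) \<in> Lab n"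
  unfolding Lab_def using PiE_fun_upd[of v "\<lambda>_. {-1,0,1}" d b "{..<n}"] by (simp add: insert_absorb)

lemma ex_cell: "0 < n \<Longrightarrow> AA n b j = v \<Longrightarrow> \<exists>i<n. b i = v"
  unfolding AA_def by (intro exI[of _ "nat (j mod int n)"]) (simp add: nat_less_iff)

lemma flipP:
  assumes n: "7 \<le> n" and b: "b \<in> Real n" and d: "d < n" and xp: "XP n b d"
  shows "b(d := -1) \<in> Real n" "b(d := -1) \<notin> X n" "\<forall>i. Data n (b(d := -1)) i = Data n b i"
proof -
  define c where "c = b(d := -1)"
  have n0: "0 < n" using n by simp
  note eb = ex_not1[OF b n0] ex_notm1[OF b n0]
  have bd: "b d = 0" and run: "\<forall>k. 1 \<le> k \<and> k \<le> n - 3 \<longrightarrow> AA n b (int d - int k) = 1"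
    using xp unfolding XP_def by auto
  have AAc: "\<And>j. AA n c j = (if j mod int n = int d then -1 else AA n b j)"
    unfolding c_def using d by (rule AA_upd)
  have Abd: "\<And>j. j mod int n = int d \<Longrightarrow> AA n b j = 0" using bd AA_at by simp
  have eq1: "\<And>j. (AA n c j \<noteq> 1) = (AA n b j \<noteq> 1)" using AAc Abd by simp
  have PPeq: "\<And>i. PP n c i = PP n b i" unfolding PP_def using eq1 by simp
  have dm1: "(int d - 1) mod int n \<noteq> int d"
  proof
    assume "(int d - 1) mod int n = int d"
    then have "(int d - 1) mod int n = int d mod int n" using d by simp
    then have "int n dvd 1" by (simp add: mod_eq_dvd_iff)
    then show False using n by simp
  qed
  have c1: "AA n c (int d - 1) = 1" using AAc[of "int d - 1"] dm1 run[rule_format, of 1] n by simp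
  have cm1: "AA n c (int d) = -1" using AAc d by simp
  have cL: "c \<in> Lab n" unfolding c_def using b d upd_Lab unfolding Real_def by auto
  show cR: "c \<in> Real n" unfolding Real_def using cL ex_cell[OF n0 c1] ex_cell[OF n0 cm1] by auto
  note ec = ex_not1[OF cR n0] ex_notm1[OF cR n0]
  have QQeq: "QQ n c i = QQ n b i" if ni: "i mod int n \<noteq> int d" for i
  proof (rule QQ_eqI)
    show "\<forall>k<QQ n b i. AA n c (i + int k) = -1"
    proof (intro allI impI)
      fix k assume "k < QQ n b i"
      then have "AA n b (i + int k) = -1" by (rule QQ_run)
      then show "AA n c (i + int k) = -1" using AAc Abd by force
    qed
    show "AA n c (i + int (QQ n b i)) \<noteq> -1"
    proof (cases "(i + int (QQ n b i)) mod int n = int d")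
      case False then show ?thesis using AAc QQ_stop[OF eb(2) n0] by simp
    next
      case True
      then have m0: "QQ n b i \<noteq> 0" using ni by (cases "QQ n b i") auto
      then have "AA n b (i + int (QQ n b i - 1)) = -1" by (intro QQ_run) simp
      moreover have "(i + int (QQ n b i - 1)) mod int n = (int d - 1) mod int n"
      proof -
        have "i + int (QQ n b i - 1) = (i + int (QQ n b i)) - 1" using m0 by (simp add: of_nat_diff)
        moreover have "((i + int (QQ n b i)) - 1) mod int n = ((i + int (QQ n b i)) mod int n - 1) mod int n"
          by (simp add: mod_diff_left_eq)
        ultimately show ?thesis using True by (simp add: add_diff_eq)
      qed
      ultimately have "AA n b (int d - 1) = -1" using AA_cong[of "i + int (QQ n b i - 1)" n "int d - 1" b] by simp
      moreover have "AA n b (int d - 1) = 1" using run[rule_format, of 1] n by simp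
      ultimately show ?thesis by simp
    qed
  qed
  have fullb: "n - 3 \<le> PP n b i" if ii: "i mod int n = int d" for i
    proof (rule PP_ge[OF eb(1) n0], intro allI impI)
      fix k assume k: "k < n - 3"
      have "(i - int (Suc k)) mod int n = (i mod int n - int (Suc k)) mod int n"
        by (simp add: mod_diff_left_eq)
      then have "(i - 1 - int k) mod int n = (int d - int (Suc k)) mod int n"
        using ii by (simp add: algebra_simps)
      then have "AA n b (i - 1 - int k) = AA n b (int d - int (Suc k))" by (rule AA_cong)
      then show "AA n b (i - 1 - int k) = 1" using run[rule_format, of "Suc k"] k by simp
    qed
  show "\<forall>i. Data n c i = Data n b i"
  proof
    fix i show "Data n c i = Data n b i"
    proof (cases "i mod int n = int d")
      case True
      then have "full n b i" "full n c i" using fullb[OF True] unfolding full_def by (auto simp: PPeq)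
      then show ?thesis unfolding Data_def by simp
    next
      case False then show ?thesis unfolding Data_def full_def using PPeq QQeq by simp
    qed
  qed
  show "c \<notin> X n"
  proof
    assume "c \<in> X n"
    then obtain d' where d': "d' < n" "XP n c d' \<or> XQ n c d'" unfolding X_def by blast
    then have cd': "c d' = 0" unfolding XP_def XQ_def by auto
    have runc: "\<forall>k. 1 \<le> k \<and> k \<le> n - 3 \<longrightarrow> AA n c (int d - int k) = 1"
    proof (intro allI impI)
      fix k assume k: "1 \<le> k \<and> k \<le> n - 3"
      have "(int d - int k) mod int n \<noteq> int d"
      proof
        assume "(int d - int k) mod int n = int d"
        then have "(int d - int k) mod int n = int d mod int n" using d by simp
        then have "int n dvd int k" by (simp add: mod_eq_dvd_iff)
        then show False using k n using dvd_imp_le[of n k] by simp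
      qed
      then show "AA n c (int d - int k) = 1" using AAc run k by simp
    qed
    have "AA n c (int d') \<noteq> 1" using cd' d' AA_nat by simp
    then have r: "(int d' - int d) mod int n \<in> {0,1,2}" using RP[OF _ runc] n by simp
    define r where "r = (int d' - int d) mod int n"
    have "r \<noteq> 0"
    proof
      assume "r = 0" then show False using mod0_eq_nat[of d' d n] d d'(1) cd' unfolding r_def c_def by auto
    qed
    then have r12: "r = 1 \<or> r = 2" using r unfolding r_def by auto
    have e1: "(int d' - r) mod int n = int d" unfolding r_def using d by (simp add: mod_diff_right_eq)
    have e2: "(int d' + (3 - r)) mod int n = (int d - int (n - 3)) mod int n"
    proof -
      have "int d' + (3 - r) = (int d' - r) + 3" by simp
      moreover have "((int d' - r) + 3) mod int n = ((int d' - r) mod int n + 3) mod int n"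
        by (simp add: mod_add_left_eq)
      ultimately have "(int d' + (3 - r)) mod int n = (int d + 3) mod int n" using e1 by (simp add: algebra_simps)
      also have "int d + 3 = (int d - int (n - 3)) + 1 * int n" using n by (simp add: of_nat_diff)
      finally show ?thesis by simp
    qed
    from d'(2) show False
    proof
      assume "XP n c d'"
      then have run': "\<forall>k. 1 \<le> k \<and> k \<le> n - 3 \<longrightarrow> AA n c (int d' - int k) = 1" unfolding XP_def by simp
      moreover have "1 \<le> nat r \<and> nat r \<le> n - 3" using r12 n by auto
      ultimately have "AA n c (int d' - int (nat r)) = 1" by blast
      moreover have "int (nat r) = r" using r12 by auto
      ultimately have "AA n c (int d' - r) = 1" by simp
      then show False using e1 AAc by simp
    next
      assume "XQ n c d'"
      then have run': "\<forall>k. 1 \<le> k \<and> k \<le> n - 3 \<longrightarrow> AA n c (int d' + int k) = -1" unfolding XQ_def by simp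
      moreover have "1 \<le> nat (3 - r) \<and> nat (3 - r) \<le> n - 3" using r12 n by auto
      ultimately have "AA n c (int d' + int (nat (3 - r))) = -1" by blast
      moreover have "AA n c (int d' + int (nat (3 - r))) = AA n c (int d - int (n - 3))"
        using e2 r12 by (intro AA_cong) auto
      moreover have "AA n c (int d - int (n - 3)) = 1" using runc[rule_format, of "n - 3"] n by simp
      ultimately show False by simp
    qed
  qed
qed

lemma flipQ:
  assumes n: "7 \<le> n" and b: "b \<in> Real n" and d: "d < n" and xq: "XQ n b d"
  shows "b(d := 1) \<in> Real n" "b(d := 1) \<notin> X n" "\<forall>i. Data n (b(d := 1)) i = Data n b i"
proof -
  define c where "c = b(d := 1)"
  have n0: "0 < n" using n by simp
  note eb = ex_not1[OF b n0] ex_notm1[OF b n0]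
  have bd: "b d = 0" and run: "\<forall>k. 1 \<le> k \<and> k \<le> n - 3 \<longrightarrow> AA n b (int d + int k) = -1"
    using xq unfolding XQ_def by auto
  have AAc: "\<And>j. AA n c j = (if j mod int n = int d then 1 else AA n b j)"
    unfolding c_def using d by (rule AA_upd)
  have Abd: "\<And>j. j mod int n = int d \<Longrightarrow> AA n b j = 0" using bd AA_at by simp
  have eq1: "\<And>j. (AA n c j \<noteq> -1) = (AA n b j \<noteq> -1)" using AAc Abd by simp
  have QQeq: "\<And>i. QQ n c i = QQ n b i" unfolding QQ_def using eq1 by simp
  have dp1: "(int d + 1) mod int n \<noteq> int d"
  proof
    assume "(int d + 1) mod int n = int d"
    then have "(int d + 1) mod int n = int d mod int n" using d by simp
    then have "int n dvd 1" by (simp add: mod_eq_dvd_iff)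
    then show False using n by simp
  qed
  have c1: "AA n c (int d + 1) = -1" using AAc[of "int d + 1"] dp1 run[rule_format, of 1] n by simp
  have cp: "AA n c (int d) = 1" using AAc d by simp
  have cL: "c \<in> Lab n" unfolding c_def using b d upd_Lab unfolding Real_def by auto
  show cR: "c \<in> Real n" unfolding Real_def using cL ex_cell[OF n0 c1] ex_cell[OF n0 cp] by auto
  have PPeq: "PP n c i = PP n b i" if ni: "(i - 1) mod int n \<noteq> int d" for i
  proof (rule PP_eqI)
    show "\<forall>k<PP n b i. AA n c (i - 1 - int k) = 1"
    proof (intro allI impI)
      fix k assume "k < PP n b i"
      then have "AA n b (i - 1 - int k) = 1" by (rule PP_run)
      then show "AA n c (i - 1 - int k) = 1" using AAc Abd by force
    qed
    show "AA n c (i - 1 - int (PP n b i)) \<noteq> 1"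
    proof (cases "(i - 1 - int (PP n b i)) mod int n = int d")
      case False then show ?thesis using AAc PP_stop[OF eb(1) n0] by simp
    next
      case True
      then have m0: "PP n b i \<noteq> 0" using ni by (cases "PP n b i") auto
      then have "AA n b (i - 1 - int (PP n b i - 1)) = 1" by (intro PP_run) simp
      moreover have "(i - 1 - int (PP n b i - 1)) mod int n = (int d + 1) mod int n"
      proof -
        have "i - 1 - int (PP n b i - 1) = (i - 1 - int (PP n b i)) + 1" using m0 by (simp add: of_nat_diff)
        moreover have "((i - 1 - int (PP n b i)) + 1) mod int n = ((i - 1 - int (PP n b i)) mod int n + 1) mod int n"
          by (simp add: mod_add_left_eq)
        ultimately show ?thesis using True by simp
      qed
      ultimately have "AA n b (int d + 1) = 1" using AA_cong[of "i - 1 - int (PP n b i - 1)" n "int d + 1" b] by simp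
      moreover have "AA n b (int d + 1) = -1" using run[rule_format, of 1] n by simp
      ultimately show ?thesis by simp
    qed
  qed
  have fullb: "n - 3 \<le> QQ n b i" if ii: "(i - 1) mod int n = int d" for i
    proof (rule QQ_ge[OF eb(2) n0], intro allI impI)
      fix k assume k: "k < n - 3"
      have "((i - 1) + int (Suc k)) mod int n = ((i - 1) mod int n + int (Suc k)) mod int n"
        by (simp add: mod_add_left_eq)
      then have "(i + int k) mod int n = (int d + int (Suc k)) mod int n"
        using ii by (simp add: algebra_simps)
      then have "AA n b (i + int k) = AA n b (int d + int (Suc k))" by (rule AA_cong)
      then show "AA n b (i + int k) = -1" using run[rule_format, of "Suc k"] k by simp
    qed
  show "\<forall>i. Data n c i = Data n b i"
  proof
    fix i show "Data n c i = Data n b i"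
    proof (cases "(i - 1) mod int n = int d")
      case True
      then have "full n b i" "full n c i" using fullb[OF True] unfolding full_def by (auto simp: QQeq)
      then show ?thesis unfolding Data_def by simp
    next
      case False then show ?thesis unfolding Data_def full_def using PPeq QQeq by simp
    qed
  qed
  show "c \<notin> X n"
  proof
    assume "c \<in> X n"
    then obtain d' where d': "d' < n" "XP n c d' \<or> XQ n c d'" unfolding X_def by blast
    then have cd': "c d' = 0" unfolding XP_def XQ_def by auto
    have runc: "\<forall>k. 1 \<le> k \<and> k \<le> n - 3 \<longrightarrow> AA n c (int d + int k) = -1"
    proof (intro allI impI)
      fix k assume k: "1 \<le> k \<and> k \<le> n - 3"
      have "(int d + int k) mod int n \<noteq> int d"
      proof
        assume "(int d + int k) mod int n = int d"
        then have "(int d + int k) mod int n = int d mod int n" using d by simp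
        then have "int n dvd int k" by (simp add: mod_eq_dvd_iff)
        then show False using k n using dvd_imp_le[of n k] by simp
      qed
      then show "AA n c (int d + int k) = -1" using AAc run k by simp
    qed
    have "AA n c (int d') \<noteq> -1" using cd' d' AA_nat by simp
    then have r: "(int d - int d') mod int n \<in> {0,1,2}" using RQ[OF _ runc] n by simp
    define r where "r = (int d - int d') mod int n"
    have "r \<noteq> 0"
    proof
      assume "r = 0" then show False using mod0_eq_nat[of d d' n] d d'(1) cd' unfolding r_def c_def by auto
    qed
    then have r12: "r = 1 \<or> r = 2" using r unfolding r_def by auto
    have e1: "(int d' + r) mod int n = int d" unfolding r_def using d by (simp add: mod_add_right_eq)
    have e2: "(int d' - (3 - r)) mod int n = (int d + int (n - 3)) mod int n"
    proof -
      have "int d' - (3 - r) = (int d' + r) - 3" by simp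
      moreover have "((int d' + r) - 3) mod int n = ((int d' + r) mod int n - 3) mod int n"
        by (simp add: mod_diff_left_eq)
      ultimately have "(int d' - (3 - r)) mod int n = (int d - 3) mod int n" using e1 by (simp add: algebra_simps)
      also have "int d - 3 = (int d + int (n - 3)) + (-1) * int n" using n by (simp add: of_nat_diff)
      finally show ?thesis by simp
    qed
    from d'(2) show False
    proof
      assume "XQ n c d'"
      then have run': "\<forall>k. 1 \<le> k \<and> k \<le> n - 3 \<longrightarrow> AA n c (int d' + int k) = -1" unfolding XQ_def by simp
      moreover have "1 \<le> nat r \<and> nat r \<le> n - 3" using r12 n by auto
      ultimately have "AA n c (int d' + int (nat r)) = -1" by blast
      moreover have "int (nat r) = r" using r12 by auto
      ultimately have "AA n c (int d' + r) = -1" by simp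
      then show False using e1 AAc by simp
    next
      assume "XP n c d'"
      then have run': "\<forall>k. 1 \<le> k \<and> k \<le> n - 3 \<longrightarrow> AA n c (int d' - int k) = 1" unfolding XP_def by simp
      moreover have "1 \<le> nat (3 - r) \<and> nat (3 - r) \<le> n - 3" using r12 n by auto
      ultimately have "AA n c (int d' - int (nat (3 - r))) = 1" by blast
      moreover have "AA n c (int d' - int (nat (3 - r))) = AA n c (int d + int (n - 3))"
        using e2 r12 by (intro AA_cong) auto
      moreover have "AA n c (int d + int (n - 3)) = -1" using runc[rule_format, of "n - 3"] n by simp
      ultimately show False by simp
    qed
  qed
qed

lemma cellEq:
  fixes a b d n :: nat
  assumes "a < n" "b < n" "(d + a) mod n = (d + b) mod n"
  shows "a = b"
proof -
  have "int ((d + a) mod n) = int ((d + b) mod n)" using assms(3) by simp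
  then have "(int d + int a) mod int n = (int d + int b) mod int n" by (simp add: of_nat_mod)
  then have "int n dvd (int d + int a) - (int d + int b)" by (simp only: mod_eq_dvd_iff)
  then have dv: "int n dvd int a - int b" by simp
  show "a = b"
  proof (rule ccontr)
    assume "a \<noteq> b"
    then consider "a < b" | "b < a" by linarith
    then show False
    proof cases
      case 1
      then have "int n dvd int b - int a" using dv by (metis dvd_minus_iff minus_diff_eq)
      then have "int n \<le> int b - int a" using 1 by (intro zdvd_imp_le) auto
      then show False using assms(1,2) by linarith
    next
      case 2
      then have "int n \<le> int a - int b" using dv by (intro zdvd_imp_le) auto
      then show False using assms(1,2) by linarith
    qed
  qed
qed


lemma AA_cell: "0 < n \<Longrightarrow> AA n b (int d + int k) = b ((d + k) mod n)"
  unfolding AA_def by (metis nat_int of_nat_add of_nat_mod)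

lemma AA_cellm: "0 < n \<Longrightarrow> k \<le> n \<Longrightarrow> AA n b (int d - int k) = b ((d + (n - k)) mod n)"
proof -
  assume n: "0 < n" "k \<le> n"
  have "int d - int k = (int d + int (n - k)) + (-1) * int n" using n by (simp add: of_nat_diff)
  then have "AA n b (int d - int k) = AA n b (int d + int (n - k))"
    by (metis AA_per mult.commute)
  then show ?thesis using AA_cell[OF n(1)] by simp
qed

lemma int_to_cell:
  assumes n: "0 < n" and i: "i < n" and r: "(int i - int d) mod int n = r"
  shows "i = (d + nat r) mod n"
proof -
  have r0: "0 \<le> r" using r n by auto
  have "int ((d + nat r) mod n) = (int d + r) mod int n" using r0 by (simp add: of_nat_mod)
  also have "\<dots> = int i mod int n" using mod_shift_eq[of "int d" "int i" "int n"] r by simp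
  also have "\<dots> = int i" using i by simp
  finally show ?thesis by simp
qed

definition fP :: "nat \<Rightarrow> nat \<Rightarrow> int \<times> int \<Rightarrow> nat \<Rightarrow> int" where
  "fP n d xy = (\<lambda>i. if i < n then (if i = d then 0 else if i = (d+1) mod n then fst xy
      else if i = (d+2) mod n then snd xy else 1) else undefined)"

definition XPs :: "nat \<Rightarrow> nat \<Rightarrow> (nat \<Rightarrow> int) set" where
  "XPs n d = {b \<in> Real n. XP n b d}"

lemma cells_distinct:
  fixes d n j k :: nat
  assumes "d < n" "j < n" "k < n" "j \<noteq> k"
  shows "(d + j) mod n \<noteq> (d + k) mod n"
  using cellEq[of j n k d] assms by auto

lemma cellsP:
  fixes n d :: nat
  assumes n: "7 \<le> n" and d: "d < n"
  shows "(d + 1) mod n \<noteq> d" "(d + 2) mod n \<noteq> d" "(d + 1) mod n \<noteq> (d + 2) mod n"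
    "(d + 1) mod n < n" "(d + 2) mod n < n"
  using cells_distinct[OF d, of 1 0] cells_distinct[OF d, of 2 0] cells_distinct[OF d, of 1 2] d n by auto

lemma classifyP:
  assumes n: "7 \<le> n" and d: "d < n" and xp: "XP n b d" and i: "i < n" and bi: "b i \<noteq> 1"
  shows "i = d \<or> i = (d + 1) mod n \<or> i = (d + 2) mod n"
proof -
  have run: "\<forall>k. 1 \<le> k \<and> k \<le> n - 3 \<longrightarrow> AA n b (int d - int k) = 1" using xp unfolding XP_def by simp
  have "AA n b (int i) \<noteq> 1" using bi i AA_nat by simp
  then have r: "(int i - int d) mod int n \<in> {0,1,2}" using RP[OF _ run] n by simp
  then consider "(int i - int d) mod int n = 0" | "(int i - int d) mod int n = 1" | "(int i - int d) mod int n = 2" by auto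
  then show ?thesis
  proof cases
    case 1 then show ?thesis using int_to_cell[OF _ i 1] n d by simp
  next
    case 2 then show ?thesis using int_to_cell[OF _ i 2] n by simp
  next
    case 3 then show ?thesis using int_to_cell[OF _ i 3] n by (simp add: nat_numeral)
  qed
qed

lemma fP_vals:
  assumes n: "7 \<le> n" and d: "d < n"
  shows "fP n d xy d = 0" "fP n d xy ((d + 1) mod n) = fst xy" "fP n d xy ((d + 2) mod n) = snd xy"
    "\<And>i. i < n \<Longrightarrow> i \<noteq> d \<Longrightarrow> i \<noteq> (d + 1) mod n \<Longrightarrow> i \<noteq> (d + 2) mod n \<Longrightarrow> fP n d xy i = 1"
  using cellsP[OF n d] d unfolding fP_def by auto

lemma card_XPs:
  assumes n: "7 \<le> n" and d: "d < n"
  shows "card (XPs n d) = 5"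
proof -
  define S :: "(int \<times> int) set" where "S = {(-1,-1),(-1,0),(-1,1),(0,-1),(1,-1)}"
  have n0: "0 < n" using n by simp
  note cs = cellsP[OF n d]
  note fv = fP_vals[OF n d]
  have inj: "inj_on (fP n d) S"
  proof (rule inj_onI)
    fix xy xy' assume "fP n d xy = fP n d xy'"
    then have "fP n d xy ((d + 1) mod n) = fP n d xy' ((d + 1) mod n)"
      "fP n d xy ((d + 2) mod n) = fP n d xy' ((d + 2) mod n)" by auto
    then show "xy = xy'" using fv by (simp add: prod_eq_iff)
  qed
  have sub1: "XPs n d \<subseteq> fP n d ` S"
  proof
    fix b assume "b \<in> XPs n d"
    then have bR: "b \<in> Real n" and xp: "XP n b d" unfolding XPs_def by auto
    have bL: "b \<in> Lab n" using bR unfolding Real_def by simp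
    have bd: "b d = 0" using xp unfolding XP_def by simp
    have eq: "b = fP n d (b ((d + 1) mod n), b ((d + 2) mod n))"
    proof
      fix i show "b i = fP n d (b ((d + 1) mod n), b ((d + 2) mod n)) i"
      proof (cases "i < n")
        case False then show ?thesis using bL unfolding Lab_def fP_def by (auto simp: PiE_iff extensional_def)
      next
        case True
        show ?thesis
        proof (cases "i = d \<or> i = (d + 1) mod n \<or> i = (d + 2) mod n")
          case True then show ?thesis using fv bd by auto
        next
          case False
          then have "b i = 1" using classifyP[OF n d xp \<open>i < n\<close>] by blast
          then show ?thesis using fv(4)[OF \<open>i < n\<close>] False by simp
        qed
      qed
    qed
    have vals: "b ((d + 1) mod n) \<in> {-1,0,1}" "b ((d + 2) mod n) \<in> {-1,0,1}"
      using bL cs unfolding Lab_def by (auto simp: PiE_iff)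
    have "AA n b (int d - int 1) = 1" using xp[unfolded XP_def] n by (intro conjunct2[OF xp[unfolded XP_def], rule_format]) simp
    then obtain j where "j < n" "b j = 1" using ex_cell[OF n0] by blast
    then obtain j where j: "j < n" "b j = -1" using bR unfolding Real_def by force
    then have "j = (d + 1) mod n \<or> j = (d + 2) mod n" using classifyP[OF n d xp j(1)] bd by auto
    then have "b ((d + 1) mod n) = -1 \<or> b ((d + 2) mod n) = -1" using j by auto
    then have "(b ((d + 1) mod n), b ((d + 2) mod n)) \<in> S" using vals unfolding S_def by auto
    then show "b \<in> fP n d ` S" using eq by blast
  qed
  have sub2: "fP n d ` S \<subseteq> XPs n d"
  proof
    fix b assume "b \<in> fP n d ` S"
    then obtain xy where xy: "xy \<in> S" "b = fP n d xy" by blast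
    have fx: "fst xy \<in> {-1,0,1}" "snd xy \<in> {-1,0,1}" "fst xy = -1 \<or> snd xy = -1" using xy(1) unfolding S_def by auto
    have bL: "b \<in> Lab n" unfolding Lab_def xy(2) fP_def using fx by (auto simp: PiE_iff extensional_def)
    have c3: "(d + 3) mod n \<noteq> d" "(d + 3) mod n \<noteq> (d + 1) mod n" "(d + 3) mod n \<noteq> (d + 2) mod n"
      using cells_distinct[OF d, of 3 0] cells_distinct[OF d, of 3 1] cells_distinct[OF d, of 3 2] n d by auto
    have b3: "b ((d + 3) mod n) = 1" using fv(4)[of "(d + 3) mod n"] c3 n xy(2) by simp
    have "b ((d + 1) mod n) = -1 \<or> b ((d + 2) mod n) = -1" using fx(3) fv(2,3) xy(2) by simp
    then have e1: "\<exists>i<n. b i = -1" using cs(4,5) by blast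
    have e2: "\<exists>i<n. b i = 1" using b3 n0 by (intro exI[of _ "(d + 3) mod n"]) simp
    have bR: "b \<in> Real n" unfolding Real_def using bL e1 e2 by blast
    have "XP n b d"
      unfolding XP_def
    proof (intro conjI allI impI)
      show "b d = 0" using fv(1) xy(2) by simp
      fix k assume k: "1 \<le> k \<and> k \<le> n - 3"
      have "d + (n - k) = d + n - k" using k n by arith
      moreover have kn: "k \<le> n" using k n by arith
      ultimately have "AA n b (int d - int k) = b ((d + (n - k)) mod n)" using AA_cellm[OF n0 kn, of b d] by simp
      moreover have "(d + (n - k)) mod n \<noteq> d" "(d + (n - k)) mod n \<noteq> (d + 1) mod n" "(d + (n - k)) mod n \<noteq> (d + 2) mod n"
        using cells_distinct[OF d, of "n - k" 0] cells_distinct[OF d, of "n - k" 1] cells_distinct[OF d, of "n - k" 2] n d k by auto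
      ultimately show "AA n b (int d - int k) = 1" using fv(4)[of "(d + (n - k)) mod n"] xy(2) n0 by simp
    qed
    then show "b \<in> XPs n d" unfolding XPs_def using bR by simp
  qed
  have "XPs n d = fP n d ` S" using sub1 sub2 by blast
  moreover have "card S = 5" unfolding S_def by simp
  ultimately show ?thesis using card_image[OF inj] by simp
qed

definition fQ :: "nat \<Rightarrow> nat \<Rightarrow> int \<times> int \<Rightarrow> nat \<Rightarrow> int" where
  "fQ n d xy = (\<lambda>i. if i < n then (if i = d then 0 else if i = (d + n - 1) mod n then fst xy
      else if i = (d + n - 2) mod n then snd xy else -1) else undefined)"

definition XQs :: "nat \<Rightarrow> nat \<Rightarrow> (nat \<Rightarrow> int) set" where
  "XQs n d = {b \<in> Real n. XQ n b d}"

lemma cellsQ: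
  fixes n d :: nat
  assumes n: "7 \<le> n" and d: "d < n"
  shows "(d + n - 1) mod n \<noteq> d" "(d + n - 2) mod n \<noteq> d" "(d + n - 1) mod n \<noteq> (d + n - 2) mod n"
    "(d + n - 1) mod n < n" "(d + n - 2) mod n < n"
proof -
  have e: "d + (n - 1) = d + n - 1" "d + (n - 2) = d + n - 2" using n by arith+
  show "(d + n - 1) mod n \<noteq> d" "(d + n - 2) mod n \<noteq> d" "(d + n - 1) mod n \<noteq> (d + n - 2) mod n"
    "(d + n - 1) mod n < n" "(d + n - 2) mod n < n"
    using cells_distinct[OF d, of "n - 1" 0] cells_distinct[OF d, of "n - 2" 0] cells_distinct[OF d, of "n - 1" "n - 2"] d n
    unfolding e by auto
qed

lemma cells_distinctN:
  fixes d n j m :: nat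
  assumes "d < n" "1 \<le> m" "m \<le> n" "j < n" "j \<noteq> n - m"
  shows "(d + j) mod n \<noteq> (d + n - m) mod n"
proof -
  have e: "d + (n - m) = d + n - m" using assms by arith
  show ?thesis using cells_distinct[of d n j "n - m"] assms unfolding e by auto
qed

lemma int_to_cellQ:
  assumes n: "0 < n" and i: "i < n" and r: "(int d - int i) mod int n = r"
  shows "i = (d + (n - nat r)) mod n"
proof -
  have r0: "0 \<le> r" "r < int n" using r n by auto
  have "int ((d + (n - nat r)) mod n) = (int d + (int n - r)) mod int n" using r0
    by (simp add: of_nat_mod of_nat_diff algebra_simps)
  also have "\<dots> = (int d - r) mod int n"
  proof -
    have "int d + (int n - r) = (int d - r) + 1 * int n" by simp
    then show ?thesis by (simp only:) (rule mod_mult_self1)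
  qed
  also have "\<dots> = int i mod int n" using r mod_diff_right_eq[of "int d" "int d - int i" "int n"] by simp
  also have "\<dots> = int i" using i by simp
  finally show ?thesis by simp
qed

lemma classifyQ:
  assumes n: "7 \<le> n" and d: "d < n" and xq: "XQ n b d" and i: "i < n" and bi: "b i \<noteq> -1"
  shows "i = d \<or> i = (d + n - 1) mod n \<or> i = (d + n - 2) mod n"
proof -
  have run: "\<forall>k. 1 \<le> k \<and> k \<le> n - 3 \<longrightarrow> AA n b (int d + int k) = -1" using xq unfolding XQ_def by simp
  have "AA n b (int i) \<noteq> -1" using bi i AA_nat by simp
  then have r: "(int d - int i) mod int n \<in> {0,1,2}" using RQ[OF _ run] n by simp
  then consider "(int d - int i) mod int n = 0" | "(int d - int i) mod int n = 1" | "(int d - int i) mod int n = 2" by auto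
  then show ?thesis
  proof cases
    case 1 then show ?thesis using int_to_cellQ[OF _ i 1] n d by simp
  next
    case 2 then show ?thesis using int_to_cellQ[OF _ i 2] n by (simp add: Nat.add_diff_assoc)
  next
    case 3 then show ?thesis using int_to_cellQ[OF _ i 3] n by (simp add: nat_numeral Nat.add_diff_assoc)
  qed
qed

lemma fQ_vals:
  assumes n: "7 \<le> n" and d: "d < n"
  shows "fQ n d xy d = 0" "fQ n d xy ((d + n - 1) mod n) = fst xy" "fQ n d xy ((d + n - 2) mod n) = snd xy"
    "\<And>i. i < n \<Longrightarrow> i \<noteq> d \<Longrightarrow> i \<noteq> (d + n - 1) mod n \<Longrightarrow> i \<noteq> (d + n - 2) mod n \<Longrightarrow> fQ n d xy i = -1"
  using cellsQ[OF n d] d unfolding fQ_def by auto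

lemma card_XQs:
  assumes n: "7 \<le> n" and d: "d < n"
  shows "card (XQs n d) = 5"
proof -
  define S :: "(int \<times> int) set" where "S = {(1,1),(1,0),(1,-1),(0,1),(-1,1)}"
  have n0: "0 < n" using n by simp
  note cs = cellsQ[OF n d]
  note fv = fQ_vals[OF n d]
  have inj: "inj_on (fQ n d) S"
  proof (rule inj_onI)
    fix xy xy' assume "fQ n d xy = fQ n d xy'"
    then have "fQ n d xy ((d + n - 1) mod n) = fQ n d xy' ((d + n - 1) mod n)"
      "fQ n d xy ((d + n - 2) mod n) = fQ n d xy' ((d + n - 2) mod n)" by auto
    then show "xy = xy'" using fv by (simp add: prod_eq_iff)
  qed
  have sub1: "XQs n d \<subseteq> fQ n d ` S"
  proof
    fix b assume "b \<in> XQs n d"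
    then have bR: "b \<in> Real n" and xq: "XQ n b d" unfolding XQs_def by auto
    have bL: "b \<in> Lab n" using bR unfolding Real_def by simp
    have bd: "b d = 0" using xq unfolding XQ_def by simp
    have eq: "b = fQ n d (b ((d + n - 1) mod n), b ((d + n - 2) mod n))"
    proof
      fix i show "b i = fQ n d (b ((d + n - 1) mod n), b ((d + n - 2) mod n)) i"
      proof (cases "i < n")
        case False then show ?thesis using bL unfolding Lab_def fQ_def by (auto simp: PiE_iff extensional_def)
      next
        case True
        show ?thesis
        proof (cases "i = d \<or> i = (d + n - 1) mod n \<or> i = (d + n - 2) mod n")
          case True then show ?thesis using fv bd by auto
        next
          case False
          then have "b i = -1" using classifyQ[OF n d xq \<open>i < n\<close>] by blast
          then show ?thesis using fv(4)[OF \<open>i < n\<close>] False by simp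
        qed
      qed
    qed
    have vals: "b ((d + n - 1) mod n) \<in> {-1,0,1}" "b ((d + n - 2) mod n) \<in> {-1,0,1}"
      using bL cs unfolding Lab_def by (auto simp: PiE_iff)
    have "AA n b (int d + int 1) = -1" using xq[unfolded XQ_def] n by (intro conjunct2[OF xq[unfolded XQ_def], rule_format]) simp
    then obtain j where "j < n" "b j = -1" using ex_cell[OF n0] by blast
    then obtain j where j: "j < n" "b j = 1" using bR unfolding Real_def by force
    then have "j = (d + n - 1) mod n \<or> j = (d + n - 2) mod n" using classifyQ[OF n d xq j(1)] bd by auto
    then have "b ((d + n - 1) mod n) = 1 \<or> b ((d + n - 2) mod n) = 1" using j by auto
    then have "(b ((d + n - 1) mod n), b ((d + n - 2) mod n)) \<in> S" using vals unfolding S_def by auto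
    then show "b \<in> fQ n d ` S" using eq by blast
  qed
  have sub2: "fQ n d ` S \<subseteq> XQs n d"
  proof
    fix b assume "b \<in> fQ n d ` S"
    then obtain xy where xy: "xy \<in> S" "b = fQ n d xy" by blast
    have fx: "fst xy \<in> {-1,0,1}" "snd xy \<in> {-1,0,1}" "fst xy = 1 \<or> snd xy = 1" using xy(1) unfolding S_def by auto
    have bL: "b \<in> Lab n" unfolding Lab_def xy(2) fQ_def using fx by (auto simp: PiE_iff extensional_def)
    have c3: "(d + 1) mod n \<noteq> d" "(d + 1) mod n \<noteq> (d + n - 1) mod n" "(d + 1) mod n \<noteq> (d + n - 2) mod n"
      using cells_distinct[OF d, of 1 0] cells_distinctN[OF d, of 1 1] cells_distinctN[OF d, of 2 1] n d by auto
    have b3: "b ((d + 1) mod n) = -1" using fv(4)[of "(d + 1) mod n"] c3 n xy(2) by simp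
    have "b ((d + n - 1) mod n) = 1 \<or> b ((d + n - 2) mod n) = 1" using fx(3) fv(2,3) xy(2) by simp
    then have e1: "\<exists>i<n. b i = 1" using cs(4,5) by blast
    have e2: "\<exists>i<n. b i = -1" using b3 n0 by (intro exI[of _ "(d + 1) mod n"]) simp
    have bR: "b \<in> Real n" unfolding Real_def using bL e1 e2 by blast
    have "XQ n b d"
      unfolding XQ_def
    proof (intro conjI allI impI)
      show "b d = 0" using fv(1) xy(2) by simp
      fix k assume k: "1 \<le> k \<and> k \<le> n - 3"
      have "k < n" "k \<noteq> n - 1" "k \<noteq> n - 2" using k n by arith+
      have "AA n b (int d + int k) = b ((d + k) mod n)" using AA_cell[OF n0] by simp
      moreover have "(d + k) mod n \<noteq> d" "(d + k) mod n \<noteq> (d + n - 1) mod n" "(d + k) mod n \<noteq> (d + n - 2) mod n"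
        using cells_distinct[OF d, of k 0] cells_distinctN[OF d, of 1 k] cells_distinctN[OF d, of 2 k] n d k
          \<open>k < n\<close> \<open>k \<noteq> n - 1\<close> \<open>k \<noteq> n - 2\<close> by auto
      ultimately show "AA n b (int d + int k) = -1" using fv(4)[of "(d + k) mod n"] xy(2) n0 by simp
    qed
    then show "b \<in> XQs n d" unfolding XQs_def using bR by simp
  qed
  have "XQs n d = fQ n d ` S" using sub1 sub2 by blast
  moreover have "card S = 5" unfolding S_def by simp
  ultimately show ?thesis using card_image[OF inj] by simp
qed

lemma AA_back:
  assumes "0 < n" "d < n" "j \<le> n"
  shows "AA n b (int ((d + j) mod n) - int j) = b d"
proof -
  have "(int ((d + j) mod n) - int j) mod int n = ((int d + int j) mod int n - int j) mod int n"
    by (simp add: of_nat_mod)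
  also have "\<dots> = int d mod int n" by (simp add: mod_diff_left_eq)
  also have "\<dots> = int d" using assms by simp
  finally show ?thesis by (rule AA_at)
qed

lemma AA_fwd:
  assumes "0 < n" "d < n" "j \<le> n"
  shows "AA n b (int ((d + n - j) mod n) + int j) = b d"
proof -
  have "(int ((d + n - j) mod n) + int j) mod int n = ((int d + int n - int j) mod int n + int j) mod int n"
    using assms by (simp add: of_nat_mod of_nat_diff)
  also have "\<dots> = (int d + int n) mod int n" by (simp add: mod_add_left_eq)
  also have "\<dots> = int d" using assms by simp
  finally show ?thesis by (rule AA_at)
qed

lemma DPP:
  assumes n: "7 \<le> n" and d: "d < n" "d' < n" "d \<noteq> d'" and x: "XP n b d" "XP n b d'"
  shows False
proof -
  have n0: "0 < n" using n by simp
  have bd: "b d = 0" "b d' = 0" using x unfolding XP_def by auto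
  then have "d' = (d + 1) mod n \<or> d' = (d + 2) mod n" using classifyP[OF n d(1) x(1) d(2)] d by auto
  then show False
  proof
    assume e: "d' = (d + 1) mod n"
    have h1: "AA n b (int d' - int 1) = 1" using conjunct2[OF x(2)[unfolded XP_def], rule_format, of 1] n by simp
    have h2: "AA n b (int ((d + 1) mod n) - int 1) = b d" by (rule AA_back[OF n0 d(1)]) (use n in simp)
    show False using h1 h2 e bd by simp
  next
    assume e: "d' = (d + 2) mod n"
    have h1: "AA n b (int d' - int 2) = 1" using conjunct2[OF x(2)[unfolded XP_def], rule_format, of 2] n by simp
    have h2: "AA n b (int ((d + 2) mod n) - int 2) = b d" by (rule AA_back[OF n0 d(1)]) (use n in simp)
    show False using h1 h2 e bd by simp
  qed
qed

lemma DQQ: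
  assumes n: "7 \<le> n" and d: "d < n" "d' < n" "d \<noteq> d'" and x: "XQ n b d" "XQ n b d'"
  shows False
proof -
  have n0: "0 < n" using n by simp
  have bd: "b d = 0" "b d' = 0" using x unfolding XQ_def by auto
  then have "d' = (d + n - 1) mod n \<or> d' = (d + n - 2) mod n" using classifyQ[OF n d(1) x(1) d(2)] d by auto
  then show False
  proof
    assume e: "d' = (d + n - 1) mod n"
    have h1: "AA n b (int d' + int 1) = -1" using conjunct2[OF x(2)[unfolded XQ_def], rule_format, of 1] n by simp
    have h2: "AA n b (int ((d + n - 1) mod n) + int 1) = b d" by (rule AA_fwd[OF n0 d(1)]) (use n in simp)
    show False using h1 h2 e bd by simp
  next
    assume e: "d' = (d + n - 2) mod n"
    have h1: "AA n b (int d' + int 2) = -1" using conjunct2[OF x(2)[unfolded XQ_def], rule_format, of 2] n by simp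
    have h2: "AA n b (int ((d + n - 2) mod n) + int 2) = b d" by (rule AA_fwd[OF n0 d(1)]) (use n in simp)
    show False using h1 h2 e bd by simp
  qed
qed

lemma DPQ:
  assumes n: "7 \<le> n" and d: "d < n" "d' < n" and x: "XP n b d" "XQ n b d'"
  shows False
proof -
  have n0: "0 < n" using n by simp
  have bd: "b d = 0" "b d' = 0" using x unfolding XP_def XQ_def by auto
  have c3: "(d + 3) mod n \<noteq> d" "(d + 3) mod n \<noteq> (d + 1) mod n" "(d + 3) mod n \<noteq> (d + 2) mod n"
    using cells_distinct[OF d(1), of 3 0] cells_distinct[OF d(1), of 3 1] cells_distinct[OF d(1), of 3 2] n d by auto
  have b3: "b ((d + 3) mod n) = 1" using classifyP[OF n d(1) x(1), of "(d + 3) mod n"] c3 n0 by auto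
  have "\<exists>j\<in>{0,1,2::nat}. d' = (d + j) mod n" using classifyP[OF n d(1) x(1) d(2)] bd d by auto
  then obtain j where j: "j \<in> {0,1,2::nat}" "d' = (d + j) mod n" by blast
  have "1 \<le> 3 - j \<and> 3 - j \<le> n - 3" using n j(1) by auto
  then have "AA n b (int d' + int (3 - j)) = -1" using conjunct2[OF x(2)[unfolded XQ_def]] by blast
  moreover have "AA n b (int d' + int (3 - j)) = b ((d + 3) mod n)"
  proof -
    have "AA n b (int d' + int (3 - j)) = b ((d' + (3 - j)) mod n)" using AA_cell[OF n0] by simp
    moreover have "(d' + (3 - j)) mod n = (d + 3) mod n"
    proof -
      have F: "(d' + (3 - j)) mod n = (d + j + (3 - j)) mod n" unfolding j(2) by (simp add: mod_add_left_eq)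
      have E: "d + j + (3 - j) = d + 3" using j(1) by auto
      show ?thesis using F unfolding E .
    qed
    ultimately show ?thesis by simp
  qed
  ultimately show False using b3 by simp
qed

definition DD :: "nat \<Rightarrow> (nat \<Rightarrow> int) \<Rightarrow> nat \<Rightarrow> (nat \<times> nat) option" where
  "DD n b = (\<lambda>i. if i < n then Data n b (int i) else None)"

lemma DD_Data: "0 < n \<Longrightarrow> DD n a = DD n b \<Longrightarrow> Data n a i = Data n b i"
proof -
  assume n: "0 < n" and e: "DD n a = DD n b"
  have m: "nat (i mod int n) < n" "int (nat (i mod int n)) = i mod int n" using n by (auto simp: nat_less_iff)
  have "Data n a i = Data n a (int (nat (i mod int n)))" using m by (intro Data_cong) simp
  also have "\<dots> = DD n a (nat (i mod int n))" using m unfolding DD_def by simp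
  also have "\<dots> = DD n b (nat (i mod int n))" using e by simp
  also have "\<dots> = Data n b (int (nat (i mod int n)))" using m unfolding DD_def by simp
  also have "\<dots> = Data n b i" using m by (intro Data_cong) simp
  finally show ?thesis .
qed

lemma finite_Lab: "finite (Lab n)" unfolding Lab_def by (intro finite_PiE) auto

lemma finite_Real: "finite (Real n)" using finite_Lab unfolding Real_def by simp

lemma card_X:
  assumes n: "7 \<le> n"
  shows "card (X n) = 10 * n"
proof -
  have XU: "X n = (\<Union>d\<in>{..<n}. XPs n d \<union> XQs n d)"
    unfolding X_def XPs_def XQs_def by auto
  have fin: "\<forall>d\<in>{..<n}. finite (XPs n d \<union> XQs n d)"
    using finite_Real unfolding XPs_def XQs_def by auto
  have disj: "\<forall>d\<in>{..<n}. \<forall>d'\<in>{..<n}. d \<noteq> d' \<longrightarrow> (XPs n d \<union> XQs n d) \<inter> (XPs n d' \<union> XQs n d') = {}"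
    unfolding XPs_def XQs_def using DPP[OF n] DQQ[OF n] DPQ[OF n] by blast
  have c: "card (XPs n d \<union> XQs n d) = 10" if d: "d \<in> {..<n}" for d
  proof -
    have "XPs n d \<inter> XQs n d = {}" unfolding XPs_def XQs_def using DPQ[OF n] d by blast
    then have "card (XPs n d \<union> XQs n d) = card (XPs n d) + card (XQs n d)"
      using finite_Real unfolding XPs_def XQs_def by (intro card_Un_disjoint) auto
    then show ?thesis using card_XPs[OF n] card_XQs[OF n] d by simp
  qed
  have "card (X n) = (\<Sum>d\<in>{..<n}. card (XPs n d \<union> XQs n d))"
    unfolding XU by (rule card_UN_disjoint) (use fin disj in auto)
  also have "\<dots> = (\<Sum>d\<in>{..<n}. 10)" using c by simp
  finally show ?thesis by simp
qed

lemma card_DD: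
  assumes n: "7 \<le> n"
  shows "card (DD n ` Real n) = card (Real n) - card (X n)"
proof -
  have n0: "0 < n" using n by simp
  have XR: "X n \<subseteq> Real n" unfolding X_def by auto
  have img: "DD n ` Real n = DD n ` (Real n - X n)"
  proof
    show "DD n ` (Real n - X n) \<subseteq> DD n ` Real n" by auto
    show "DD n ` Real n \<subseteq> DD n ` (Real n - X n)"
    proof
      fix z assume "z \<in> DD n ` Real n"
      then obtain b where b: "b \<in> Real n" "z = DD n b" by blast
      show "z \<in> DD n ` (Real n - X n)"
      proof (cases "b \<in> X n")
        case False then show ?thesis using b by blast
      next
        case True
        then obtain d where d: "d < n" "XP n b d \<or> XQ n b d" unfolding X_def by blast
        then obtain c where c: "c \<in> Real n" "c \<notin> X n" "\<forall>i. Data n c i = Data n b i"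
          using flipP[OF n b(1) d(1)] flipQ[OF n b(1) d(1)] by blast
        have "DD n c = DD n b" unfolding DD_def by (intro ext) (simp add: c(3))
        then show ?thesis using b c by (metis DiffI image_eqI)
      qed
    qed
  qed
  have inj: "inj_on (DD n) (Real n - X n)"
  proof (rule inj_onI)
    fix a b assume a: "a \<in> Real n - X n" and b: "b \<in> Real n - X n" and e: "DD n a = DD n b"
    have D: "\<forall>i. Data n a i = Data n b i" using DD_Data[OF n0 e] by blast
    show "a = b"
    proof (rule ccontr)
      assume "a \<noteq> b"
      moreover have "a \<in> Lab n" "b \<in> Lab n" using a b unfolding Real_def by auto
      ultimately obtain d where d: "d < n" "a d \<noteq> b d" unfolding Lab_def
        by (metis PiE_ext lessThan_iff)
      then show False using key[OF n _ _ D d(1) d(2)] a b by blast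
    qed
  qed
  have "card (DD n ` Real n) = card (Real n - X n)" unfolding img by (rule card_image[OF inj])
  also have "\<dots> = card (Real n) - card (X n)" using XR finite_Real by (intro card_Diff_subset) (auto intro: finite_subset)
  finally show ?thesis .
qed

lemma Real_eq: "Real n = (Lab n - (PiE {..<n} (\<lambda>_. {0,1}) \<union> PiE {..<n} (\<lambda>_. {0,-1}))) \<union> PiE {..<n} (\<lambda>_. {0})"
proof (intro set_eqI iffI)
  fix b assume b: "b \<in> Real n"
  then have bL: "b \<in> Lab n" unfolding Real_def by simp
  show "b \<in> (Lab n - (PiE {..<n} (\<lambda>_. {0,1}) \<union> PiE {..<n} (\<lambda>_. {0,-1}))) \<union> PiE {..<n} (\<lambda>_. {0})"
  proof (cases "\<forall>i<n. b i = 0")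
    case True
    have "b = (\<lambda>x\<in>{..<n}. 0)" using True bL unfolding Lab_def
      by (auto simp: PiE_iff extensional_def fun_eq_iff)
    then show ?thesis by (simp add: PiE_iff)
  next
    case False
    then obtain i j where "i < n" "b i = 1" "j < n" "b j = -1" using b unfolding Real_def by auto
    then have ij: "i < n" "b i = 1" "j < n" "b j = -1" by auto
    have nA: "b \<notin> PiE {..<n} (\<lambda>_. {0,1})"
    proof
      assume "b \<in> PiE {..<n} (\<lambda>_. {0,1})"
      then have "b j \<in> {0,1}" by (rule PiE_mem) (use ij in simp)
      then show False using ij by simp
    qed
    have nB: "b \<notin> PiE {..<n} (\<lambda>_. {0,-1})"
    proof
      assume "b \<in> PiE {..<n} (\<lambda>_. {0,-1})"
      then have "b i \<in> {0,-1}" by (rule PiE_mem) (use ij in simp)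
      then show False using ij by simp
    qed
    show ?thesis using bL nA nB by auto
  qed
next
  fix b assume b: "b \<in> (Lab n - (PiE {..<n} (\<lambda>_. {0,1}) \<union> PiE {..<n} (\<lambda>_. {0,-1}))) \<union> PiE {..<n} (\<lambda>_. {0})"
  show "b \<in> Real n"
  proof (cases "b \<in> PiE {..<n} (\<lambda>_. {0})")
    case True then show ?thesis unfolding Real_def Lab_def by (auto simp: PiE_iff)
  next
    case False
    then have bL: "b \<in> Lab n" and nA: "b \<notin> PiE {..<n} (\<lambda>_. {0,1})" and nB: "b \<notin> PiE {..<n} (\<lambda>_. {0,-1})"
      using b by auto
    have ext: "b \<in> extensional {..<n}" and vals: "\<forall>i<n. b i \<in> {-1,0,1}" using bL unfolding Lab_def by (auto simp: PiE_iff)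
    obtain i where "i < n" "b i \<notin> {0,1}" using nA ext by (auto simp: PiE_iff)
    then have i: "i < n" "b i = -1" using vals by auto
    obtain j where "j < n" "b j \<notin> {0,-1}" using nB ext by (auto simp: PiE_iff)
    then have j: "j < n" "b j = 1" using vals by auto
    show ?thesis unfolding Real_def using bL i j by auto
  qed
qed

lemma card_Real: "card (Real n) = 3 ^ n + 2 - 2 ^ (n + 1)"
proof -
  define L where "L = Lab n"
  define A where "A = PiE {..<n} (\<lambda>_. {0,1::int})"
  define B where "B = PiE {..<n} (\<lambda>_. {0,-1::int})"
  define Z where "Z = PiE {..<n} (\<lambda>_. {0::int})"
  have cL: "card L = 3 ^ n" unfolding L_def Lab_def by (simp add: card_PiE numeral_3_eq_3)
  have cA: "card A = 2 ^ n" unfolding A_def by (simp add: card_PiE numeral_2_eq_2)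
  have cB: "card B = 2 ^ n" unfolding B_def by (simp add: card_PiE numeral_2_eq_2)
  have AB: "A \<inter> B = Z" unfolding A_def B_def Z_def PiE_Int by (rule arg_cong[where f="PiE {..<n}"]) auto
  have cZ: "card Z = 1" unfolding Z_def by (simp add: card_PiE)
  have fA: "finite A" "finite B" "finite L" unfolding A_def B_def L_def Lab_def by (auto intro: finite_PiE)
  have "card (A \<union> B) + card (A \<inter> B) = card A + card B" using card_Un_Int[OF fA(1,2)] by simp
  then have cU: "card (A \<union> B) = 2 ^ (n + 1) - 1" using cA cB AB cZ by simp
  have sub: "A \<union> B \<subseteq> L" unfolding A_def B_def L_def Lab_def by (auto simp: PiE_iff)
  have cD: "card (L - (A \<union> B)) = 3 ^ n - (2 ^ (n + 1) - 1)"
    using card_Diff_subset[OF finite_subset[OF sub fA(3)] sub] cL cU by simp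
  have le: "2 ^ (n + 1) - 1 \<le> (3::nat) ^ n" using card_mono[OF fA(3) sub] cL cU by simp
  have ZA: "Z \<subseteq> A" unfolding Z_def A_def by (auto simp: PiE_iff)
  have "card (Real n) = card (L - (A \<union> B)) + card Z"
    unfolding Real_eq L_def[symmetric] A_def[symmetric] B_def[symmetric] Z_def[symmetric]
    using ZA fA by (intro card_Un_disjoint) (auto intro: finite_subset)
  also have "\<dots> = 3 ^ n + 2 - 2 ^ (n + 1)" using cD cZ le
    by (simp add: algebra_simps)
  finally show ?thesis .
qed

definition blk :: "nat set list \<Rightarrow> nat \<Rightarrow> nat" where
  "blk D c = (THE k. k < length D \<and> c \<in> D ! k)"

definition labD :: "nat \<Rightarrow> nat set list \<Rightarrow> nat \<Rightarrow> int" where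
  "labD n D = (\<lambda>i\<in>{..<n}. sgn (int (blk D ((i + 1) mod n)) - int (blk D i)))"

definition WW :: "nat \<Rightarrow> (nat \<Rightarrow> int) \<Rightarrow> int \<Rightarrow> nat set" where
  "WW n b i = (\<lambda>j. nat (j mod int n)) ` {i - int (PP n b i) - 1 .. i + int (QQ n b i) + 1}"

lemma OP_ex: "D \<in> ordered_partitions n \<Longrightarrow> c < n \<Longrightarrow> \<exists>k. k < length D \<and> c \<in> D ! k"
proof -
  assume D: "D \<in> ordered_partitions n" and c: "c < n"
  have "c \<in> \<Union>(set D)" using D c unfolding ordered_partitions_def by auto
  then obtain B where B: "B \<in> set D" "c \<in> B" by blast
  then obtain k where "k < length D" "D ! k = B" by (auto simp: in_set_conv_nth)
  then show ?thesis using B by blast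
qed

lemma OP_uniq: "D \<in> ordered_partitions n \<Longrightarrow> k < length D \<Longrightarrow> c \<in> D ! k \<Longrightarrow> k' < length D \<Longrightarrow> c \<in> D ! k' \<Longrightarrow> k = k'"
  unfolding ordered_partitions_def by blast

lemma blk_eq: "D \<in> ordered_partitions n \<Longrightarrow> k < length D \<Longrightarrow> c \<in> D ! k \<Longrightarrow> blk D c = k"
  unfolding blk_def by (rule the_equality) (auto dest: OP_uniq)

lemma blk_prop: "D \<in> ordered_partitions n \<Longrightarrow> c < n \<Longrightarrow> blk D c < length D \<and> c \<in> D ! blk D c"
  using OP_ex[of D n c] blk_eq[of D n] by blast

lemma blk_lt_n: "D \<in> ordered_partitions n \<Longrightarrow> k < length D \<Longrightarrow> c \<in> D ! k \<Longrightarrow> c < n"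
proof -
  assume D: "D \<in> ordered_partitions n" and k: "k < length D" "c \<in> D ! k"
  have "D ! k \<in> set D" using k by simp
  then have "c \<in> \<Union>(set D)" using k by blast
  then show ?thesis using D unfolding ordered_partitions_def by auto
qed

lemma cyc:
  fixes t :: "nat \<Rightarrow> int"
  assumes n: "0 < n" and h: "\<forall>i<n. t i \<le> t ((i + 1) mod n)"
  shows "\<forall>i<n. t i = t 0"
proof -
  have mono: "\<forall>i\<le>j. t i \<le> t j" if "j < n" for j
    using that
  proof (induction j)
    case 0 then show ?case by simp
  next
    case (Suc j)
    have "t j \<le> t ((j + 1) mod n)" using h[rule_format, of j] Suc.prems by simp
    then have "t j \<le> t (Suc j)" using Suc.prems by simp
    then show ?case using Suc by (auto simp: le_Suc_eq)
  qed
  have "t (n - 1) \<le> t ((n - 1 + 1) mod n)" using h[rule_format, of "n - 1"] n by simp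
  then have last: "t (n - 1) \<le> t 0" using n by simp
  show ?thesis
  proof (intro allI impI)
    fix i assume i: "i < n"
    have "t 0 \<le> t i" using mono[OF i] by simp
    moreover have "t i \<le> t (n - 1)" using mono[of "n - 1"] i n by simp
    ultimately show "t i = t 0" using last by simp
  qed
qed

lemma labD_Lab: "labD n D \<in> Lab n"
  unfolding labD_def Lab_def by (auto simp: PiE_iff sgn_if)

lemma labD_Real:
  assumes n: "0 < n"
  shows "labD n D \<in> Real n"
proof -
  define t where "t = (\<lambda>i. int (blk D i))"
  have lb: "\<And>i. i < n \<Longrightarrow> labD n D i = sgn (t ((i + 1) mod n) - t i)"
    unfolding labD_def t_def by simp
  show ?thesis
  proof (cases "\<forall>i<n. labD n D i = 0")
    case True then show ?thesis unfolding Real_def using labD_Lab by blast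
  next
    case False
    then obtain i0 where i0: "i0 < n" "labD n D i0 \<noteq> 0" by blast
    have has_m1: "\<exists>i<n. labD n D i = -1"
    proof (rule ccontr)
      assume "\<not> (\<exists>i<n. labD n D i = -1)"
      then have "\<forall>i<n. t i \<le> t ((i + 1) mod n)" using lb by (auto simp: sgn_if split: if_splits)
      then have A: "\<forall>i<n. t i = t 0" using cyc[OF n] by blast
      have "t ((i0 + 1) mod n) = t i0" using A[rule_format, of i0] A[rule_format, of "(i0 + 1) mod n"] i0(1) n by simp
      then have "labD n D i0 = 0" using lb[OF i0(1)] by simp
      then show False using i0 by simp
    qed
    have has_1: "\<exists>i<n. labD n D i = 1"
    proof (rule ccontr)
      assume "\<not> (\<exists>i<n. labD n D i = 1)"
      then have "\<forall>i<n. - t i \<le> - t ((i + 1) mod n)" using lb by (auto simp: sgn_if split: if_splits)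
      then have A: "\<forall>i<n. - t i = - t 0" using cyc[OF n, of "\<lambda>i. - t i"] by blast
      have "t ((i0 + 1) mod n) = t i0" using A[rule_format, of i0] A[rule_format, of "(i0 + 1) mod n"] i0(1) n by simp
      then have "labD n D i0 = 0" using lb[OF i0(1)] by simp
      then show False using i0 by simp
    qed
    show ?thesis unfolding Real_def using labD_Lab has_m1 has_1 by blast
  qed
qed

lemma WW_cong:
  assumes "i mod int n = i' mod int n"
  shows "WW n b i = WW n b i'"
proof -
  have P: "PP n b i = PP n b i'" and Q: "QQ n b i = QQ n b i'" using PP_cong QQ_cong assms by blast+
  define sh where "sh = i' - i"
  have "int n dvd i - i'" using assms mod_eq_dvd_iff by blast
  then have "int n dvd i' - i" by (metis dvd_minus_iff minus_diff_eq)
  then have sh: "sh mod int n = 0" unfolding sh_def by (simp add: dvd_eq_mod_eq_0)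
  have iv: "{i' - int (PP n b i') - 1 .. i' + int (QQ n b i') + 1} = (\<lambda>j. j + sh) ` {i - int (PP n b i) - 1 .. i + int (QQ n b i) + 1}"
    unfolding image_add_atLeastAtMost' unfolding P Q sh_def by (simp add: algebra_simps)
  have g: "nat ((j + sh) mod int n) = nat (j mod int n)" for j
  proof -
    have "(j + sh) mod int n = (j + sh mod int n) mod int n" by (rule mod_add_right_eq[symmetric])
    also have "\<dots> = j mod int n" using sh by simp
    finally show ?thesis by simp
  qed
  show ?thesis unfolding WW_def iv image_image g ..
qed

lemma WW_rec:
  assumes n: "0 < n" and e1: "\<exists>j. AA n b j \<noteq> 1" and e2: "\<exists>j. AA n b j \<noteq> -1"
  shows "WW n b i = {nat ((i - 1) mod int n), nat (i mod int n), nat ((i + 1) mod int n)}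
     \<union> (if AA n b (i - 1) = 1 then WW n b (i - 1) else {}) \<union> (if AA n b i = -1 then WW n b (i + 1) else {})"
proof -
  define g where "g = (\<lambda>j::int. nat (j mod int n))"
  define P where "P = int (PP n b i)"
  define Q where "Q = int (QQ n b i)"
  have WWd: "\<And>k. WW n b k = g ` {k - int (PP n b k) - 1 .. k + int (QQ n b k) + 1}" unfolding WW_def g_def by simp
  have L: "{i - 1 - int (PP n b (i - 1)) - 1 .. i - 1 + int (QQ n b (i - 1)) + 1} = {i - P - 1 .. i}"
    if "AA n b (i - 1) = 1"
  proof -
    have "PP n b i = Suc (PP n b (i - 1))" by (rule PP_suc[OF e1 n that])
    moreover have "QQ n b (i - 1) = 0" using that by (intro QQ_zero) simp
    ultimately show ?thesis unfolding P_def by simp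
  qed
  have L0: "P = 0" if "AA n b (i - 1) \<noteq> 1" using PP_zero[OF that] unfolding P_def by simp
  have R: "{i + 1 - int (PP n b (i + 1)) - 1 .. i + 1 + int (QQ n b (i + 1)) + 1} = {i .. i + Q + 1}"
    if "AA n b i = -1"
  proof -
    have "QQ n b i = Suc (QQ n b (i + 1))" by (rule QQ_suc[OF e2 n that])
    moreover have "PP n b (i + 1) = 0" using that by (intro PP_zero) simp
    ultimately show ?thesis unfolding Q_def by simp
  qed
  have R0: "Q = 0" if "AA n b i \<noteq> -1" using QQ_zero[OF that] unfolding Q_def by simp
  have P0: "0 \<le> P" "0 \<le> Q" unfolding P_def Q_def by auto
  have I: "{i - P - 1 .. i + Q + 1} = {i - 1, i, i + 1}
     \<union> (if AA n b (i - 1) = 1 then {i - P - 1 .. i} else {}) \<union> (if AA n b i = -1 then {i .. i + Q + 1} else {})"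
    using L0 R0 P0 by (cases "AA n b (i - 1) = 1"; cases "AA n b i = -1") (auto simp: atLeastAtMost_iff)
  have "WW n b i = g ` {i - P - 1 .. i + Q + 1}" unfolding WWd P_def Q_def ..
  also have "\<dots> = {g (i - 1), g i, g (i + 1)}
     \<union> (if AA n b (i - 1) = 1 then g ` {i - P - 1 .. i} else {}) \<union> (if AA n b i = -1 then g ` {i .. i + Q + 1} else {})"
    unfolding I by (simp add: image_Un)
  also have "\<dots> = {g (i - 1), g i, g (i + 1)}
     \<union> (if AA n b (i - 1) = 1 then WW n b (i - 1) else {}) \<union> (if AA n b i = -1 then WW n b (i + 1) else {})"
  proof -
    have A1: "g ` {i - P - 1 .. i} = WW n b (i - 1)" if "AA n b (i - 1) = 1"
      using L[OF that] by (simp only: WWd)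
    have A2: "g ` {i .. i + Q + 1} = WW n b (i + 1)" if "AA n b i = -1"
      using R[OF that] by (simp only: WWd)
    have E1: "(if AA n b (i - 1) = 1 then g ` {i - P - 1 .. i} else {}) = (if AA n b (i - 1) = 1 then WW n b (i - 1) else {})"
      by (rule if_cong[OF refl A1 refl])
    have E2: "(if AA n b i = -1 then g ` {i .. i + Q + 1} else {}) = (if AA n b i = -1 then WW n b (i + 1) else {})"
      by (rule if_cong[OF refl A2 refl])
    show ?thesis unfolding E1 E2 ..
  qed
  finally show ?thesis unfolding g_def .
qed

lemma cellL: "0 < n \<Longrightarrow> i < n \<Longrightarrow> nat ((int i - 1) mod int n) = (i + n - 1) mod n"
proof -
  assume n: "0 < n" and i: "i < n"
  have "int ((i + n - 1) mod n) = (int i + int n - 1) mod int n" using n by (simp add: of_nat_mod of_nat_diff)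
  also have "\<dots> = (int i - 1 + 1 * int n) mod int n" by (simp add: algebra_simps)
  also have "\<dots> = (int i - 1) mod int n" by (rule mod_mult_self1)
  finally show ?thesis by (metis nat_int)
qed

lemma cellR: "0 < n \<Longrightarrow> nat ((int i + 1) mod int n) = (i + 1) mod n"
  by (metis nat_int of_nat_Suc of_nat_mod Suc_eq_plus1 add.commute)

lemma cellLR: "0 < (n::nat) \<Longrightarrow> i < n \<Longrightarrow> ((i + n - 1) mod n + 1) mod n = i"
proof -
  assume n: "0 < n" and i: "i < n"
  have "((i + n - 1) mod n + 1) mod n = (i + n - 1 + 1) mod n" by (rule mod_add_left_eq)
  also have "i + n - 1 + 1 = i + n" using n by simp
  finally show ?thesis using i by simp
qed

lemma WW_self: "i < n \<Longrightarrow> i \<in> WW n b (int i)"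
  unfolding WW_def by (rule image_eqI[of _ _ "int i"]) auto

lemma relD_snoc: "relD n (xs @ [B]) = relstep n B (relD n xs)"
  unfolding relD_def by simp

lemma relD_take:
  assumes D: "D \<in> ordered_partitions n" and n: "0 < n"
  shows "m \<le> length D \<Longrightarrow> \<forall>i<n. relD n (take m D) i = (if blk D i < m then WW n (labD n D) (int i) else {i})"
proof (induction m)
  case 0 then show ?case by (simp add: relD_def)
next
  case (Suc m)
  define b where "b = labD n D"
  define R where "R = relD n (take m D)"
  have m: "m < length D" using Suc.prems by simp
  have IH: "\<And>k. k < n \<Longrightarrow> R k = (if blk D k < m then WW n b (int k) else {k})"
    using Suc.IH m unfolding R_def b_def by simp
  have bR: "b \<in> Real n" unfolding b_def using labD_Real[OF n] .
  note e = ex_not1[OF bR n] ex_notm1[OF bR n]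
  have tk: "take (Suc m) D = take m D @ [D ! m]" using m by (simp add: take_Suc_conv_app_nth)
  show ?case
  proof (intro allI impI)
    fix i assume i: "i < n"
    have st: "relD n (take (Suc m) D) i = (\<Union>k\<in>nb n (D ! m) i. R k)"
      unfolding tk relD_snoc relstep_def R_def ..
    show "relD n (take (Suc m) D) i = (if blk D i < Suc m then WW n (labD n D) (int i) else {i})"
    proof (cases "i \<in> D ! m")
      case False
      have "blk D i \<noteq> m" using blk_prop[OF D i] False by auto
      then show ?thesis using False st IH[OF i] unfolding nb_def b_def by auto
    next
      case True
      have bi: "blk D i = m" using blk_eq[OF D m True] .
      define l where "l = (i + n - 1) mod n"
      define r where "r = (i + 1) mod n"
      have lr: "l < n" "r < n" unfolding l_def r_def using n by auto
      have nbi: "nb n (D ! m) i = {l, i, r}" unfolding nb_def l_def r_def using True i by simp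
      have U: "(\<Union>k\<in>nb n (D ! m) i. R k) = R l \<union> {i} \<union> R r"
        unfolding nbi using IH[OF i] bi by auto
      have AL: "AA n b (int i - 1) = sgn (int (blk D i) - int (blk D l))"
      proof -
        have "AA n b (int i - 1) = b l" unfolding AA_def l_def using cellL[OF n i] by simp
        also have "\<dots> = sgn (int (blk D ((l + 1) mod n)) - int (blk D l))" unfolding b_def labD_def using lr by simp
        also have "(l + 1) mod n = i" unfolding l_def by (rule cellLR[OF n i])
        finally show ?thesis .
      qed
      have AR: "AA n b (int i) = sgn (int (blk D r) - int (blk D i))"
        using AA_nat[OF i, of b] i unfolding b_def labD_def r_def by simp
      have c1: "(AA n b (int i - 1) = 1) = (blk D l < m)" using AL bi by (simp add: sgn_if)
      have c2: "(AA n b (int i) = -1) = (blk D r < m)" using AR bi by (simp add: sgn_if)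
      have g: "nat ((int i - 1) mod int n) = l" "nat (int i mod int n) = i" "nat ((int i + 1) mod int n) = r"
        using cellL[OF n i] cellR[OF n, of i] i unfolding l_def r_def by auto
      have p1: "0 \<le> (int i - 1) mod int n" "0 \<le> (int i + 1) mod int n" using n by simp_all
      have il: "int l = (int i - 1) mod int n" using g(1)[symmetric] nat_0_le[OF p1(1)] by simp
      have ir: "int r = (int i + 1) mod int n" using g(3)[symmetric] nat_0_le[OF p1(2)] by simp
      have wl: "WW n b (int i - 1) = WW n b (int l)" by (rule WW_cong) (simp add: il)
      have wr: "WW n b (int i + 1) = WW n b (int r)" by (rule WW_cong) (simp add: ir)
      have W: "WW n b (int i) = {l, i, r} \<union> (if blk D l < m then WW n b (int l) else {})
               \<union> (if blk D r < m then WW n b (int r) else {})"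
        using WW_rec[OF n e, of "int i"] unfolding g c1 c2 wl wr .
      have "relD n (take (Suc m) D) i = WW n b (int i)"
        unfolding st U W IH[OF lr(1)] IH[OF lr(2)] using WW_self[OF lr(1), of b] WW_self[OF lr(2), of b] by auto
      then show ?thesis using bi unfolding b_def by simp
    qed
  qed
qed

lemma relD_WW:
  assumes D: "D \<in> ordered_partitions n" and n: "0 < n" and i: "i < n"
  shows "relD n D i = WW n (labD n D) (int i)"
  using relD_take[OF D n, of "length D"] blk_prop[OF D i] i by simp

lemma WW_sub: "0 < n \<Longrightarrow> WW n b i \<subseteq> {..<n}"
  unfolding WW_def by (auto simp: nat_less_iff)

lemma WW_mem: "j \<in> {i - int (PP n b i) - 1 .. i + int (QQ n b i) + 1} \<Longrightarrow> nat (j mod int n) \<in> WW n b i"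
  unfolding WW_def by blast

lemma WW_full:
  assumes n: "0 < n" and f: "full n b i"
  shows "WW n b i = {..<n}"
proof
  show "WW n b i \<subseteq> {..<n}" using WW_sub[OF n] .
  show "{..<n} \<subseteq> WW n b i"
  proof
    fix x assume x: "x \<in> {..<n}"
    define lo where "lo = i - int (PP n b i) - 1"
    define j where "j = lo + (int x - lo) mod int n"
    have j1: "lo \<le> j" "j < lo + int n" unfolding j_def using n by auto
    have "j \<le> i + int (QQ n b i) + 1" using j1 f unfolding full_def lo_def by linarith
    then have jm: "j \<in> {i - int (PP n b i) - 1 .. i + int (QQ n b i) + 1}" using j1 unfolding lo_def by simp
    have "j mod int n = int x mod int n" unfolding j_def by (simp add: mod_add_right_eq)
    then have "nat (j mod int n) = x" using x by simp
    then show "x \<in> WW n b i" using WW_mem[OF jm] by simp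
  qed
qed

lemma WW_miss:
  assumes n: "0 < n" and f: "\<not> full n b i" and p: "p = i + int (QQ n b i) + 2 \<or> p = i - int (PP n b i) - 2"
  shows "nat (p mod int n) \<notin> WW n b i"
proof
  assume "nat (p mod int n) \<in> WW n b i"
  then obtain j where j: "j \<in> {i - int (PP n b i) - 1 .. i + int (QQ n b i) + 1}" "nat (p mod int n) = nat (j mod int n)"
    unfolding WW_def by blast
  have "p mod int n = j mod int n" using j(2) n by (simp add: nat_eq_iff2)
  then have dv: "int n dvd p - j" by (simp add: mod_eq_dvd_iff)
  have lt: "PP n b i + QQ n b i + 3 < n" using f unfolding full_def by simp
  from p show False
  proof
    assume "p = i + int (QQ n b i) + 2"
    then have "1 \<le> p - j" "p - j < int n" using j(1) lt by auto
    then show False using dv zdvd_imp_le by fastforce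
  next
    assume "p = i - int (PP n b i) - 2"
    then have "1 \<le> j - p" "j - p < int n" using j(1) lt by auto
    moreover have "int n dvd j - p" using dv by (metis dvd_minus_iff minus_diff_eq)
    ultimately show False using zdvd_imp_le by fastforce
  qed
qed

lemma WW_Data:
  assumes n: "0 < n"
  shows "WW n b i = WW n c i \<longleftrightarrow> Data n b i = Data n c i"
proof
  assume D: "Data n b i = Data n c i"
  show "WW n b i = WW n c i"
  proof (cases "full n b i")
    case True
    then have "full n c i" using D unfolding Data_def by (auto split: if_splits)
    then show ?thesis using WW_full[OF n] True by simp
  next
    case False
    then have "\<not> full n c i" "PP n b i = PP n c i" "QQ n b i = QQ n c i" using D unfolding Data_def by (auto split: if_splits)
    then show ?thesis unfolding WW_def by simp
  qed
next
  assume W: "WW n b i = WW n c i"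
  have lt: "nat (p mod int n) < n" for p using n by (simp add: nat_less_iff)
  have fb: "full n b i = full n c i"
  proof
    assume f: "full n b i"
    show "full n c i"
    proof (rule ccontr)
      assume "\<not> full n c i"
      then have "nat ((i + int (QQ n c i) + 2) mod int n) \<notin> WW n c i" using WW_miss[OF n] by blast
      then show False using W WW_full[OF n f] lt by auto
    qed
  next
    assume f: "full n c i"
    show "full n b i"
    proof (rule ccontr)
      assume "\<not> full n b i"
      then have "nat ((i + int (QQ n b i) + 2) mod int n) \<notin> WW n b i" using WW_miss[OF n] by blast
      then show False using W WW_full[OF n f] lt by auto
    qed
  qed
  show "Data n b i = Data n c i"
  proof (cases "full n b i")
    case True then show ?thesis using fb unfolding Data_def by simp
  next
    case False
    then have fc: "\<not> full n c i" using fb by simp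
    have Qle: "QQ n x i \<le> QQ n y i" if "WW n x i = WW n y i" "\<not> full n y i" for x y
    proof (rule ccontr)
      assume "\<not> QQ n x i \<le> QQ n y i"
      then have "i + int (QQ n y i) + 2 \<in> {i - int (PP n x i) - 1 .. i + int (QQ n x i) + 1}" by auto
      then have "nat ((i + int (QQ n y i) + 2) mod int n) \<in> WW n x i" by (rule WW_mem)
      moreover have "nat ((i + int (QQ n y i) + 2) mod int n) \<notin> WW n y i" using WW_miss[OF n that(2)] by blast
      ultimately show False using that(1) by simp
    qed
    have Ple: "PP n x i \<le> PP n y i" if "WW n x i = WW n y i" "\<not> full n y i" for x y
    proof (rule ccontr)
      assume "\<not> PP n x i \<le> PP n y i"
      then have "i - int (PP n y i) - 2 \<in> {i - int (PP n x i) - 1 .. i + int (QQ n x i) + 1}" by auto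
      then have "nat ((i - int (PP n y i) - 2) mod int n) \<in> WW n x i" by (rule WW_mem)
      moreover have "nat ((i - int (PP n y i) - 2) mod int n) \<notin> WW n y i" using WW_miss[OF n that(2)] by blast
      ultimately show False using that(1) by simp
    qed
    have "QQ n b i = QQ n c i" using Qle[OF W fc] Qle[OF W[symmetric] False] by simp
    moreover have "PP n b i = PP n c i" using Ple[OF W fc] Ple[OF W[symmetric] False] by simp
    ultimately show ?thesis using False fc unfolding Data_def by simp
  qed
qed

lemma pot_sum:
  fixes w :: "nat \<Rightarrow> int"
  shows "(\<Sum>j<Suc i. w j) - (\<Sum>j<i. w j) = w i"
  by simp

lemma sgn_weight:
  fixes \<alpha> \<beta> :: int
  assumes v: "v \<in> {-1,0,1}" and a: "v = 1 \<Longrightarrow> 0 < \<alpha>" and bb: "v = -1 \<Longrightarrow> 0 < \<beta>"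
  shows "sgn (\<alpha> * (if v = 1 then 1 else 0) - \<beta> * (if v = -1 then 1 else 0)) = v"
  using v a bb by (auto simp: sgn_if)

lemma potential:
  assumes b: "b \<in> Real n" and n: "0 < n"
  shows "\<exists>t::nat \<Rightarrow> int. \<forall>i<n. sgn (t ((i + 1) mod n) - t i) = b i"
proof -
  have bv: "\<And>i. i < n \<Longrightarrow> b i \<in> {-1,0,1}" using b unfolding Real_def Lab_def by (auto simp: PiE_iff)
  define I1 where "I1 = (\<lambda>j. if b j = 1 then 1 else 0 :: int)"
  define Im where "Im = (\<lambda>j. if b j = -1 then 1 else 0 :: int)"
  define p where "p = (\<Sum>j<n - 1. I1 j)"
  define m where "m = (\<Sum>j<n - 1. Im j)"
  have p0: "0 \<le> p" "0 \<le> m" unfolding p_def m_def I1_def Im_def by (auto intro: sum_nonneg)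
  have ple: "p \<le> int (n - 1)" "m \<le> int (n - 1)"
  proof -
    have "p \<le> (\<Sum>j<n - 1. 1)" unfolding p_def I1_def by (intro sum_mono) auto
    then show "p \<le> int (n - 1)" by simp
    have "m \<le> (\<Sum>j<n - 1. 1)" unfolding m_def Im_def by (intro sum_mono) auto
    then show "m \<le> int (n - 1)" by simp
  qed
  have pge: "1 \<le> p" if "j < n - 1" "b j = 1" for j
  proof -
    have "I1 j \<le> p" unfolding p_def using that by (intro member_le_sum) (auto simp: I1_def)
    then show ?thesis using that unfolding I1_def by simp
  qed
  have mge: "1 \<le> m" if "j < n - 1" "b j = -1" for j
  proof -
    have "Im j \<le> m" unfolding m_def using that by (intro member_le_sum) (auto simp: Im_def)
    then show ?thesis using that unfolding Im_def by simp
  qed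
  have main: "\<exists>\<alpha> \<beta>. (\<forall>i<n - 1. (b i = 1 \<longrightarrow> 0 < \<alpha>) \<and> (b i = -1 \<longrightarrow> 0 < \<beta>)) \<and> sgn (- (\<alpha> * p - \<beta> * m)) = b (n - 1)"
  proof -
    have bl: "b (n - 1) \<in> {-1,0,1}" using bv n by simp
    then consider "b (n - 1) = -1" | "b (n - 1) = 0" | "b (n - 1) = 1" by auto
    then show ?thesis
    proof cases
      case 1
      have nz: "\<not> (\<forall>i<n. b i = 0)"
      proof
        assume "\<forall>i<n. b i = 0"
        then have "b (n - 1) = 0" using n by simp
        then show False using 1 by simp
      qed
      then obtain j where j: "j < n" "b j = 1" using b unfolding Real_def by auto
      then have "j < n - 1" using 1 by (cases "j = n - 1") auto
      then have "1 \<le> p" using pge j by blast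
      moreover have "int n * 1 \<le> int n * p" by (rule mult_left_mono) (use \<open>1 \<le> p\<close> in auto)
      moreover have "int (n - 1) = int n - 1" using n by simp
      ultimately have "int n * p - 1 * m > 0" using ple(2) by linarith
      then show ?thesis using 1 by (intro exI[of _ "int n"] exI[of _ 1]) (auto simp: sgn_if n)
    next
      case 2
      have "\<forall>i<n - 1. (b i = 1 \<longrightarrow> 0 < m) \<and> (b i = -1 \<longrightarrow> 0 < p)"
      proof (intro allI impI conjI)
        fix i assume i: "i < n - 1"
        show "0 < m" if h: "b i = 1"
        proof -
          obtain j where j: "j < n" "b j = -1" using b h i unfolding Real_def by fastforce
          then have "j < n - 1" using 2 by (cases "j = n - 1") auto
          then show ?thesis using mge j by fastforce
        qed
        show "0 < p" if h: "b i = -1"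
        proof -
          obtain j where j: "j < n" "b j = 1" using b h i unfolding Real_def by fastforce
          then have "j < n - 1" using 2 by (cases "j = n - 1") auto
          then show ?thesis using pge j by fastforce
        qed
      qed
      then show ?thesis using 2 by (intro exI[of _ m] exI[of _ p]) (simp add: algebra_simps)
    next
      case 3
      have nz: "\<not> (\<forall>i<n. b i = 0)"
      proof
        assume "\<forall>i<n. b i = 0"
        then have "b (n - 1) = 0" using n by simp
        then show False using 3 by simp
      qed
      then obtain j where j: "j < n" "b j = -1" using b unfolding Real_def by auto
      then have "j < n - 1" using 3 by (cases "j = n - 1") auto
      then have "1 \<le> m" using mge j by blast
      moreover have "int n * 1 \<le> int n * m" by (rule mult_left_mono) (use \<open>1 \<le> m\<close> in auto)
      moreover have "int (n - 1) = int n - 1" using n by simp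
      ultimately have "1 * p - int n * m < 0" using ple(1) by linarith
      then show ?thesis using 3 by (intro exI[of _ 1] exI[of _ "int n"]) (auto simp: sgn_if n)
    qed
  qed
  then obtain \<alpha> \<beta> where ab: "\<forall>i<n - 1. (b i = 1 \<longrightarrow> 0 < \<alpha>) \<and> (b i = -1 \<longrightarrow> 0 < \<beta>)"
    and last: "sgn (- (\<alpha> * p - \<beta> * m)) = b (n - 1)" by blast
  define w where "w = (\<lambda>j. \<alpha> * I1 j - \<beta> * Im j)"
  define t where "t = (\<lambda>c. \<Sum>j<c. w j)"
  have tl: "t (n - 1) = \<alpha> * p - \<beta> * m"
    unfolding t_def w_def p_def m_def by (simp add: sum_subtractf sum_distrib_left)
  show ?thesis
  proof (intro exI allI impI)
    fix i assume i: "i < n"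
    show "sgn (t ((i + 1) mod n) - t i) = b i"
    proof (cases "i = n - 1")
      case True
      then have "(i + 1) mod n = 0" using n by simp
      then show ?thesis using True tl last unfolding t_def by simp
    next
      case False
      then have i1: "i < n - 1" using i by simp
      then have "(i + 1) mod n = Suc i" using i by simp
      then have "t ((i + 1) mod n) - t i = w i" unfolding t_def by simp
      then show ?thesis unfolding w_def I1_def Im_def
        using sgn_weight[OF bv[OF i]] ab i1 by auto
    qed
  qed
qed

lemma sched_from_t:
  fixes t :: "nat \<Rightarrow> int"
  assumes n: "0 < n"
  defines "vals \<equiv> sorted_list_of_set (t ` {..<n})"
  defines "D \<equiv> map (\<lambda>v. {c. c < n \<and> t c = v}) vals"
  shows "D \<in> ordered_partitions n"
    and "\<forall>c<n. \<forall>c'<n. sgn (int (blk D c') - int (blk D c)) = sgn (t c' - t c)"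
proof -
  have fin: "finite (t ` {..<n})" by simp
  have sv: "set vals = t ` {..<n}" unfolding vals_def using fin by simp
  have dv: "distinct vals" unfolding vals_def by simp
  have sw: "sorted_wrt (<) vals" unfolding vals_def using strict_sorted_list_of_set by blast
  have len: "length D = length vals" unfolding D_def by simp
  have Dk: "\<And>k. k < length vals \<Longrightarrow> D ! k = {c. c < n \<and> t c = vals ! k}" unfolding D_def by simp
  have ex: "\<exists>k<length vals. vals ! k = t c" if "c < n" for c
  proof -
    have "t c \<in> set vals" using sv that by simp
    then show ?thesis by (auto simp: in_set_conv_nth)
  qed
  show OP: "D \<in> ordered_partitions n"
    unfolding ordered_partitions_def
  proof (intro CollectI conjI allI impI)
    show "\<forall>B\<in>set D. B \<noteq> {}"
    proof
      fix B assume "B \<in> set D"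
      then obtain v where v: "v \<in> set vals" "B = {c. c < n \<and> t c = v}" unfolding D_def by auto
      then obtain c where "c < n" "t c = v" using sv by auto
      then show "B \<noteq> {}" using v by auto
    qed
    fix i j assume ij: "i < length D \<and> j < length D \<and> i \<noteq> j"
    show "D ! i \<inter> D ! j = {}"
    proof -
      have "vals ! i \<noteq> vals ! j" using ij dv len by (simp add: nth_eq_iff_index_eq)
      then show ?thesis using ij len Dk by auto
    qed
  next
    show "\<Union> (set D) = {..<n}"
    proof
      show "\<Union> (set D) \<subseteq> {..<n}" unfolding D_def by auto
      show "{..<n} \<subseteq> \<Union> (set D)"
      proof
        fix c assume "c \<in> {..<n}"
        then obtain k where k: "k < length vals" "vals ! k = t c" using ex by blast
        then have "c \<in> D ! k" using Dk \<open>c \<in> {..<n}\<close> by auto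
        moreover have "D ! k \<in> set D" using k len by simp
        ultimately show "c \<in> \<Union> (set D)" by blast
      qed
    qed
  qed
  have bk: "blk D c < length vals \<and> vals ! blk D c = t c" if c: "c < n" for c
  proof -
    obtain k where k: "k < length vals" "vals ! k = t c" using ex[OF c] by blast
    then have "c \<in> D ! k" using Dk c by auto
    then have "blk D c = k" using blk_eq[OF OP] k len by simp
    then show ?thesis using k by simp
  qed
  show "\<forall>c<n. \<forall>c'<n. sgn (int (blk D c') - int (blk D c)) = sgn (t c' - t c)"
  proof (intro allI impI)
    fix c c' assume c: "c < n" and c': "c' < n"
    have A: "blk D c < length vals" "vals ! blk D c = t c" using bk[OF c] by auto
    have B: "blk D c' < length vals" "vals ! blk D c' = t c'" using bk[OF c'] by auto
    consider "blk D c < blk D c'" | "blk D c = blk D c'" | "blk D c' < blk D c" by linarith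
    then show "sgn (int (blk D c') - int (blk D c)) = sgn (t c' - t c)"
    proof cases
      case 1
      then have "vals ! blk D c < vals ! blk D c'" using sorted_wrt_nth_less[OF sw 1 B(1)] by simp
      then show ?thesis using 1 A B by simp
    next
      case 2 then show ?thesis using A B by simp
    next
      case 3
      then have "vals ! blk D c' < vals ! blk D c" using sorted_wrt_nth_less[OF sw 3 A(1)] by simp
      then show ?thesis using 3 A B by simp
    qed
  qed
qed

lemma labD_surj:
  assumes b: "b \<in> Real n" and n: "0 < n"
  shows "\<exists>D\<in>ordered_partitions n. labD n D = b"
proof -
  obtain t :: "nat \<Rightarrow> int" where t: "\<forall>i<n. sgn (t ((i + 1) mod n) - t i) = b i" using potential[OF b n] by blast
  define D where "D = map (\<lambda>v. {c. c < n \<and> t c = v}) (sorted_list_of_set (t ` {..<n}))"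
  have OP: "D \<in> ordered_partitions n" and sg: "\<forall>c<n. \<forall>c'<n. sgn (int (blk D c') - int (blk D c)) = sgn (t c' - t c)"
    using sched_from_t[OF n, of t] unfolding D_def by blast+
  have bL: "b \<in> Lab n" using b unfolding Real_def by simp
  have "labD n D = b"
  proof
    fix i show "labD n D i = b i"
    proof (cases "i < n")
      case True
      have "(i + 1) mod n < n" using n by simp
      then show ?thesis using True sg t unfolding labD_def by simp
    next
      case False then show ?thesis using bL unfolding labD_def Lab_def by (auto simp: PiE_iff extensional_def)
    qed
  qed
  then show ?thesis using OP by blast
qed

lemma card_kernel:
  assumes "\<forall>x\<in>S. \<forall>y\<in>S. (f x = f y) = (g x = g y)"
  shows "card (f ` S) = card (g ` S)"
proof -
  define h where "h = (\<lambda>z. g (SOME x. x \<in> S \<and> f x = z))"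
  have hf: "h (f x) = g x" if x: "x \<in> S" for x
  proof -
    have "\<exists>y. y \<in> S \<and> f y = f x" using x by blast
    then have "(SOME y. y \<in> S \<and> f y = f x) \<in> S \<and> f (SOME y. y \<in> S \<and> f y = f x) = f x" by (rule someI_ex)
    then show ?thesis unfolding h_def using assms x by blast
  qed
  have img: "g ` S = h ` (f ` S)" using hf by (auto simp: image_image)
  have inj: "inj_on h (f ` S)"
  proof (rule inj_onI)
    fix u v assume "u \<in> f ` S" "v \<in> f ` S" "h u = h v"
    then obtain x y where "x \<in> S" "y \<in> S" "u = f x" "v = f y" "g x = g y" using hf by auto
    then show "u = v" using assms by blast
  qed
  show ?thesis unfolding img using card_image[OF inj] by simp
qed

lemma dyn_DD:
  assumes n: "0 < n" and D: "D \<in> ordered_partitions n" and D': "D' \<in> ordered_partitions n"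
  shows "(dynamics n D = dynamics n D') = (DD n (labD n D) = DD n (labD n D'))"
proof -
  have "(dynamics n D = dynamics n D') = (\<forall>i<n. relD n D i = relD n D' i)" by (rule dyn_eq_iff)
  also have "\<dots> = (\<forall>i<n. WW n (labD n D) (int i) = WW n (labD n D') (int i))"
    using relD_WW[OF D n] relD_WW[OF D' n] by simp
  also have "\<dots> = (\<forall>i<n. Data n (labD n D) (int i) = Data n (labD n D') (int i))"
    using WW_Data[OF n] by simp
  also have "\<dots> = (DD n (labD n D) = DD n (labD n D'))"
    unfolding DD_def fun_eq_iff by auto
  finally show ?thesis .
qed

lemma ineq: "7 \<le> n \<Longrightarrow> 2 ^ (n + 1) + 10 * n \<le> (3::nat) ^ n"
proof (induction n rule: dec_induct)
  case base then show ?case by simp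
next
  case (step m)
  have "(3::nat) ^ 7 \<le> 3 ^ m" by (rule power_increasing) (use step(1) in auto)
  then have "(3::nat) ^ m \<ge> 10" by simp
  then show ?case using step(3) by simp
qed

theorem card_dyn:
  assumes n: "7 \<le> n"
  shows "card (all_dynamics n) = 3 ^ n + 2 - 2 ^ (n + 1) - 10 * n"
proof -
  have n0: "0 < n" using n by simp
  have "card (all_dynamics n) = card (dynamics n ` ordered_partitions n)" unfolding all_dynamics_def ..
  also have "\<dots> = card ((\<lambda>D. DD n (labD n D)) ` ordered_partitions n)"
    by (rule card_kernel) (use dyn_DD[OF n0] in blast)
  also have "(\<lambda>D. DD n (labD n D)) ` ordered_partitions n = DD n ` (labD n ` ordered_partitions n)"
    by (simp add: image_image)
  also have "labD n ` ordered_partitions n = Real n"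
    using labD_Real[OF n0] labD_surj[OF _ n0] by blast
  also have "card (DD n ` Real n) = card (Real n) - card (X n)" by (rule card_DD[OF n])
  finally show ?thesis using card_Real card_X[OF n] by simp
qed

theorem mainTheorem7:
  fixes n :: nat
  assumes "n > 6"
  shows "sensitivity n = (3 ^ n - 2 ^ (n + 1) - 10 * real n + 2) / (3 ^ n - 2 ^ (n + 1) + 2)"
proof -
  have n: "7 \<le> n" using assms by simp
  define k where "k = 3 ^ n - (2 ^ (n + 1) + 10 * n)"
  have k: "(3::nat) ^ n = 2 ^ (n + 1) + 10 * n + k" unfolding k_def using ineq[OF n] by simp
  have c: "card (all_dynamics n) = k + 2" using card_dyn[OF n] k by simp
  have r: "(3::real) ^ n = 2 ^ (n + 1) + 10 * real n + real k"
    using arg_cong[OF k, of real] by simp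
  show ?thesis unfolding sensitivity_def c using r by simp
qed

end
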